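(* Assume $|C|<m$ and $A\not\subseteq B$, and let $\mathcal S_1=\{(w_1+uw_2,w_3)\in\mathcal R^m: w_1\in\Delta_A,\ w_2\in\Delta_B,\ w_3\in\Delta_C^c\}$. Then $\Phi(\mathscr C_{\mathcal S_1})$ is a $4$-weight linear code over $\mathbb F_q$ with parameters $\big[2q^{|A|+|B|}(q^m-q^{|C|}),\ m+|A|+|A\cup B|,\ (q-1)q^{|A|+|B|-1}(q^m-q^{|C|})\big]$ whose nonzero Hamming weights and frequencies are: $(q-1)q^{|A|+|B|-1}(q^m-q^{|C|})$ with frequency $2(q^{|A\cup B|-|B|}-1)$; $2(q-1)q^{|A|+|B|-1}(q^m-q^{|C|})$ with frequency $q^{m+|A|+|A\cup B|}-2q^{m-|C|+|A\cup B|-|B|}+q^{m-|C|}$; $(q-1)q^{|A|+|B|-1}(2q^m-q^{|C|})$ with frequency $2(q^{|A\cup B|-|B|}-1)(q^{m-|C|}-1)$; $2(q-1)q^{m+|A|+|B|-1}$ with frequency $q^{m-|C|}-1$. Moreover, if $q=2$ or $q=3$, then $\Phi(\mathscr C_{\mathcal S_1})$ is self-orthogonal with respect to the Euclidean inner product on $\mathbb F_q^{n}$.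
   Context: Let $q$ be a prime power, $\mathbb F_q$ the field of order $q$, $m\ge 2$ an integer and $[m]=\{1,\dots,m\}$. For $v\in\mathbb F_q^m$, $\mathrm{supp}(v)=\{i:v_i\ne0\}$ and $wt_H$ is Hamming weight. For nonempty $P\subseteq[m]$, $\Delta_P=\{v\in\mathbb F_q^m:\mathrm{supp}(v)\subseteq P\}$, $\Delta_P^c=\mathbb F_q^m\setminus\Delta_P$. $A,B,C$ denote nonempty subsets of $[m]$. Let $R=\mathbb F_q[u]/\langle u^2\rangle$ and $\mathcal R=R\times\mathbb F_q$; each element of $\mathcal R^m$ is uniquely $(d+ue,f)$ with $d,e,f\in\mathbb F_q^m$. Define $\langle(d_1+ue_1,f_1),(d_2+ue_2,f_2)\rangle=(d_1+ue_1)\cdot(d_2+ue_2)+u\,f_1\cdot f_2\in R$, where $x\cdot y=\sum_i x_iy_i$. For a nonempty $\mathcal D\subseteq\mathcal R^m$ listed in a fixed order, $\mathscr C_{\mathcal D}=\{(\langle r,s\rangle)_{s\in\mathcal D}: r\in\mathcal R^m\}\subseteq R^{|\mathcal D|}$. The Gray map $\Phi:R^n\to\mathbb F_q^{2n}$ is $\Phi(d+ue)=(e,d+e)$ for $d,e\in\mathbb F_q^n$, applied to a code elementwise. An $[n,k,d]$ code is a linear code of length $n$, dimension $k$, minimum Hamming distance $d$; a code $\mathcal C$ is self-orthogonal if $\mathcal C\subseteq\mathcal C^\perp$. *)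

theory Defs
  imports Complex_Main "HOL-Library.Function_Algebras"
begin

(* Vectors in F_q^m are functions 'n \<Rightarrow> 'a, where 'n is a finite index type with
   CARD('n) = m (so [m] corresponds to UNIV :: 'n set) and 'a is a finite field, q = CARD('a). *)

definition supp :: "('n \<Rightarrow> 'a::zero) \<Rightarrow> 'n set" where
  "supp v = {i. v i \<noteq> 0}"

definition Delta :: "'n set \<Rightarrow> ('n \<Rightarrow> 'a::zero) set" where
  "Delta P = {v. supp v \<subseteq> P}"

definition DeltaC :: "'n set \<Rightarrow> ('n \<Rightarrow> 'a::zero) set" where
  "DeltaC P = UNIV - Delta P"

definition dotp :: "('n::finite \<Rightarrow> 'a::comm_ring) \<Rightarrow> ('n \<Rightarrow> 'a) \<Rightarrow> 'a" where
  "dotp x y = (\<Sum>i\<in>UNIV. x i * y i)"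

(* An element d + u e of R = F_q[u]/<u^2> is represented as the pair (d, e).
   An element (d + u e, f) of \<R>^m = (R \<times> F_q)^m is represented as the triple (d, e, f)
   of vectors in F_q^m. *)

type_synonym ('n, 'a) Rvec = "('n \<Rightarrow> 'a) \<times> ('n \<Rightarrow> 'a) \<times> ('n \<Rightarrow> 'a)"

(* <(d1+ue1,f1),(d2+ue2,f2)> = (d1+ue1).(d2+ue2) + u f1.f2
                             = d1.d2 + u (d1.e2 + e1.d2 + f1.f2) *)
definition rinner :: "('n::finite, 'a::comm_ring) Rvec \<Rightarrow> ('n, 'a) Rvec \<Rightarrow> 'a \<times> 'a" where
  "rinner r s = (case r of (d1, e1, f1) \<Rightarrow> case s of (d2, e2, f2) \<Rightarrow>
      (dotp d1 d2, dotp d1 e2 + dotp e1 d2 + dotp f1 f2))"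

definition codeR :: "('n::finite, 'a::comm_ring) Rvec set \<Rightarrow> (('n, 'a) Rvec \<Rightarrow> 'a \<times> 'a) set" where
  "codeR D = {(\<lambda>s. if s \<in> D then rinner r s else (0, 0)) | r. True}"

(* Gray map \<Phi>(d + u e) = (e, d + e): coordinate (s, False) carries e_s and (s, True) carries
   d_s + e_s; the resulting vector has index set D \<times> UNIV, of size 2|D|. *)
definition gray :: "'s set \<Rightarrow> ('s \<Rightarrow> 'a::comm_ring \<times> 'a) \<Rightarrow> ('s \<times> bool \<Rightarrow> 'a)" where
  "gray D c = (\<lambda>(s, b). if s \<in> D then (if b then fst (c s) + snd (c s) else snd (c s)) else 0)"

definition Phi :: "'s set \<Rightarrow> ('s \<Rightarrow> 'a::comm_ring \<times> 'a) set \<Rightarrow> ('s \<times> bool \<Rightarrow> 'a) set" where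
  "Phi D C = gray D ` C"

definition ambient :: "'i set \<Rightarrow> ('i \<Rightarrow> 'a::zero) set" where
  "ambient I = {v. \<forall>i. i \<notin> I \<longrightarrow> v i = 0}"

definition fscale :: "'a::field \<Rightarrow> ('i \<Rightarrow> 'a) \<Rightarrow> ('i \<Rightarrow> 'a)" where
  "fscale c v = (\<lambda>i. c * v i)"

definition is_linear_code :: "'i set \<Rightarrow> ('i \<Rightarrow> 'a::field) set \<Rightarrow> bool" where
  "is_linear_code I C \<longleftrightarrow> finite I \<and> C \<subseteq> ambient I \<and> module.subspace fscale C"

definition code_length :: "'i set \<Rightarrow> ('i \<Rightarrow> 'a) set \<Rightarrow> nat" where
  "code_length I C = card I"

definition code_dim :: "('i \<Rightarrow> 'a::field) set \<Rightarrow> nat" where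
  "code_dim C = vector_space.dim fscale C"

definition wtH :: "('i \<Rightarrow> 'a::zero) \<Rightarrow> nat" where
  "wtH v = card {i. v i \<noteq> 0}"

definition distH :: "('i \<Rightarrow> 'a) \<Rightarrow> ('i \<Rightarrow> 'a) \<Rightarrow> nat" where
  "distH x y = card {i. x i \<noteq> y i}"

definition min_dist :: "('i \<Rightarrow> 'a) set \<Rightarrow> nat" where
  "min_dist C = Min {distH x y | x y. x \<in> C \<and> y \<in> C \<and> x \<noteq> y}"

definition weights :: "('i \<Rightarrow> 'a::zero) set \<Rightarrow> nat set" where
  "weights C = {wtH c | c. c \<in> C \<and> c \<noteq> 0}"

definition freq :: "('i \<Rightarrow> 'a::zero) set \<Rightarrow> nat \<Rightarrow> nat" where
  "freq C w = card {c \<in> C. c \<noteq> 0 \<and> wtH c = w}"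

definition dual_code :: "'i set \<Rightarrow> ('i \<Rightarrow> 'a::comm_ring) set \<Rightarrow> ('i \<Rightarrow> 'a) set" where
  "dual_code I C = {y \<in> ambient I. \<forall>x\<in>C. (\<Sum>i\<in>I. x i * y i) = 0}"

definition self_orthogonal :: "'i set \<Rightarrow> ('i \<Rightarrow> 'a::comm_ring) set \<Rightarrow> bool" where
  "self_orthogonal I C \<longleftrightarrow> C \<subseteq> dual_code I C"

definition S1 :: "'n set \<Rightarrow> 'n set \<Rightarrow> 'n set \<Rightarrow> ('n::finite, 'a::comm_ring) Rvec set" where
  "S1 A B C = {(w1, w2, w3). w1 \<in> Delta A \<and> w2 \<in> Delta B \<and> w3 \<in> DeltaC C}"

end

theory Submission
  imports Defs "HOL-Library.FuncSet" "HOL-Library.Cardinality"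
begin

lemma module_fscale: "module (fscale :: 'a::field \<Rightarrow> ('i \<Rightarrow> 'a) \<Rightarrow> _)"
  by unfold_locales (auto simp: fscale_def algebra_simps fun_eq_iff)

lemma vs_fscale: "vector_space (fscale :: 'a::field \<Rightarrow> ('i \<Rightarrow> 'a) \<Rightarrow> _)"
  unfolding vector_space_def using module_fscale unfolding module_def by blast

lemma ofnat_card_zero: "of_nat CARD('a::{finite,ring_1}) = (0::'a)"
proof -
  have "(\<Sum>x\<in>UNIV. x + 1) = (\<Sum>x\<in>(UNIV::'a set). x)"
    by (rule sum.reindex_bij_betw) (rule bij_betwI[of _ _ _ "\<lambda>x. x - 1"], auto)
  then show ?thesis by (simp add: sum.distrib)
qed

lemma card_subspace_fscale:
  fixes S :: "('i \<Rightarrow> 'a::{finite,field}) set"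
  assumes sub: "module.subspace fscale S" and fin: "finite S"
  shows "card S = CARD('a) ^ vector_space.dim fscale S"
proof -
  interpret vs: vector_space "fscale :: 'a \<Rightarrow> ('i \<Rightarrow> 'a) \<Rightarrow> _" by (rule vs_fscale)
  obtain B where B: "B \<subseteq> S" "vs.independent B" "S \<subseteq> vs.span B" "card B = vs.dim S"
    using vs.basis_exists by blast
  have finB: "finite B" using B(1) fin finite_subset by blast
  have spanB: "vs.span B = S" using vs.span_subspace[OF B(1) B(3) sub] .
  let ?f = "\<lambda>u. \<Sum>v\<in>B. fscale (u v) v"
  have "S = ?f ` (B \<rightarrow>\<^sub>E UNIV)"
  proof -
    have "S = range ?f" using spanB vs.span_finite[OF finB] by simp
    also have "\<dots> = ?f ` (B \<rightarrow>\<^sub>E UNIV)"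
    proof
      show "range ?f \<subseteq> ?f ` (B \<rightarrow>\<^sub>E UNIV)"
      proof
        fix x assume "x \<in> range ?f"
        then obtain u where x: "x = ?f u" by blast
        have "x = ?f (restrict u B)" unfolding x by (rule sum.cong) auto
        moreover have "restrict u B \<in> B \<rightarrow>\<^sub>E UNIV" by simp
        ultimately show "x \<in> ?f ` (B \<rightarrow>\<^sub>E UNIV)" by (rule image_eqI)
      qed
    qed (rule image_subsetI, rule rangeI)
    finally show ?thesis .
  qed
  moreover have "inj_on ?f (B \<rightarrow>\<^sub>E UNIV)"
  proof (rule inj_onI)
    fix u w assume u: "u \<in> B \<rightarrow>\<^sub>E UNIV" and w: "w \<in> B \<rightarrow>\<^sub>E UNIV" and eq: "?f u = ?f w"
    have s0: "(\<Sum>v\<in>B. fscale (u v - w v) v) = 0"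
      using eq by (simp add: vs.scale_left_diff_distrib sum_subtractf)
    have "\<forall>v\<in>B. u v - w v = 0"
    proof (rule ccontr)
      assume "\<not> (\<forall>v\<in>B. u v - w v = 0)"
      then have "vs.dependent B" unfolding vs.dependent_finite[OF finB]
        using s0 by (intro exI[of _ "\<lambda>v. u v - w v"]) auto
      then show False using B(2) by simp
    qed
    then have "\<forall>v\<in>B. u v = w v" by simp
    then show "u = w" using u w by (intro PiE_ext) auto
  qed
  ultimately have "card S = card (B \<rightarrow>\<^sub>E (UNIV :: 'a set))"
    by (simp add: card_image)
  also have "\<dots> = CARD('a) ^ card B" by (rule card_funcsetE[OF finB])
  finally show ?thesis using B(4) by simp
qed


lemma dotp_upd: "dotp v (w(i := x)) = dotp v w + v i * (x - w i)"
proof -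
  have "dotp v (w(i := x)) = v i * x + (\<Sum>j\<in>UNIV - {i}. v j * w j)"
    unfolding dotp_def by (subst sum.remove[of _ i]) (auto intro!: sum.cong)
  moreover have "dotp v w = v i * w i + (\<Sum>j\<in>UNIV - {i}. v j * w j)"
    unfolding dotp_def by (subst sum.remove[of _ i]) auto
  ultimately show ?thesis by (simp add: algebra_simps)
qed

lemma dotp_add_left: "dotp (u + v) w = dotp u w + dotp v w"
  unfolding dotp_def by (simp add: algebra_simps sum.distrib)

lemma dotp_diff_left: "dotp (u - v) w = dotp u w - dotp v w"
  unfolding dotp_def by (simp add: algebra_simps sum_subtractf)

lemma dotp_scale_left: "dotp (\<lambda>i. k * u i) w = k * dotp u w"
  unfolding dotp_def by (simp add: algebra_simps sum_distrib_left)

lemma dotp_zero_left[simp]: "dotp 0 w = 0"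
  unfolding dotp_def by simp

lemma dotp_cong_Delta:
  assumes "w \<in> Delta P" "\<forall>i\<in>P. u i = v i"
  shows "dotp u w = dotp v w"
  unfolding dotp_def
proof (rule sum.cong)
  fix i
  have "w i = 0" if "i \<notin> P" using assms(1) that by (auto simp: Delta_def supp_def)
  then show "u i * w i = v i * w i"
    using assms by (cases "i \<in> P") auto
qed simp

lemma dotp_zero_Delta:
  assumes "w \<in> Delta P" "\<forall>i\<in>P. u i = 0"
  shows "dotp u w = 0"
  using dotp_cong_Delta[OF assms(1), of u 0] assms(2) by simp

lemma Delta_upd: "i \<in> P \<Longrightarrow> w \<in> Delta P \<Longrightarrow> w(i := x) \<in> Delta P"
  by (auto simp: Delta_def supp_def)

lemma DeltaC_upd: "i \<in> P \<Longrightarrow> w \<in> DeltaC P \<Longrightarrow> w(i := x) \<in> DeltaC P"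
  by (auto simp: DeltaC_def Delta_def supp_def)

lemma Delta_PiE: "Delta P = PiE UNIV (\<lambda>i. if i \<in> P then UNIV else {0})"
  by (auto simp: Delta_def supp_def PiE_def Pi_def split: if_splits)

lemma card_Delta: "card (Delta P :: ('n::finite \<Rightarrow> 'a::{finite,zero}) set) = CARD('a) ^ card P"
proof -
  have "card (Delta P :: ('n \<Rightarrow> 'a) set) = (\<Prod>i\<in>UNIV. if i \<in> P then CARD('a) else 1)"
    unfolding Delta_PiE by (subst card_PiE) (auto intro!: prod.cong)
  also have "\<dots> = CARD('a) ^ card P"
    by (simp add: prod.If_cases)
  finally show ?thesis .
qed

lemma Delta_UNIV[simp]: "Delta UNIV = UNIV"
  by (auto simp: Delta_def)

lemma card_fun_UNIV: "CARD('n::finite \<Rightarrow> 'a::{finite,zero}) = CARD('a) ^ CARD('n)"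
  using card_Delta[of "UNIV :: 'n set", where 'a='a] by simp

lemma card_DeltaC: "card (DeltaC P :: ('n::finite \<Rightarrow> 'a::{finite,zero}) set) = CARD('a) ^ CARD('n) - CARD('a) ^ card P"
  unfolding DeltaC_def by (simp add: card_Diff_subset card_Delta card_fun_UNIV)

lemma shift_count:
  fixes f :: "'x \<Rightarrow> 'a::{finite,field}"
  assumes fin: "finite X" and sh: "\<And>\<delta>. \<exists>h. bij_betw h X X \<and> (\<forall>x\<in>X. f (h x) = f x + \<delta>)"
  shows "card {x\<in>X. f x \<noteq> 0} * CARD('a) = (CARD('a) - 1) * card X"
proof -
  let ?F = "\<lambda>t. {x\<in>X. f x = t}"
  have fib: "card (?F t) = card (?F 0)" for t
  proof -
    obtain h where h: "bij_betw h X X" "\<forall>x\<in>X. f (h x) = f x + t" using sh by blast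
    have "h ` ?F 0 = ?F t"
    proof
      show "h ` ?F 0 \<subseteq> ?F t" using h bij_betwE by fastforce
      show "?F t \<subseteq> h ` ?F 0"
      proof
        fix y assume y: "y \<in> ?F t"
        then obtain x where x: "x \<in> X" "y = h x" using h(1) by (metis (no_types, lifting) bij_betw_iff_bijections mem_Collect_eq)
        then have "f x = 0" using h(2) y by auto
        then show "y \<in> h ` ?F 0" using x by blast
      qed
    qed
    moreover have "inj_on h (?F 0)"
      using bij_betw_imp_inj_on[OF h(1)] by (rule inj_on_subset) auto
    ultimately show ?thesis using card_image by fastforce
  qed
  have "X = (\<Union>t\<in>UNIV. ?F t)" by auto
  then have "card X = (\<Sum>t\<in>UNIV. card (?F t))"
    using card_UN_disjoint[of UNIV ?F] fin by auto
  also have "\<dots> = CARD('a) * card (?F 0)"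
  proof -
    define c where "c = card (?F 0)"
    have "\<forall>t. card (?F t) = c" unfolding c_def using fib by blast
    then show ?thesis unfolding c_def[symmetric] by simp
  qed
  finally have cX: "card X = CARD('a) * card (?F 0)" .
  have "{x\<in>X. f x \<noteq> 0} = X - ?F 0" by auto
  then have "card {x\<in>X. f x \<noteq> 0} = card X - card (?F 0)"
    by (simp add: card_Diff_subset fin)
  then show ?thesis using cX by (simp add: algebra_simps diff_mult_distrib)
qed


definition lf :: "('n::finite \<Rightarrow> 'a::comm_ring) \<Rightarrow> ('n \<Rightarrow> 'a) \<Rightarrow> ('n \<Rightarrow> 'a) \<Rightarrow> ('n, 'a) Rvec \<Rightarrow> 'a" where
  "lf v1 v2 v3 s = dotp v1 (fst s) + dotp v2 (fst (snd s)) + dotp v3 (snd (snd s))"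

lemma S1_eq: "S1 A B C = Delta A \<times> Delta B \<times> DeltaC C"
  by (auto simp: S1_def)

lemma finite_all[simp]: "finite (X :: ('n::finite \<Rightarrow> 'a::finite) set)"
  by (rule finite_subset[of _ UNIV]) auto

lemma finite_all3[simp]: "finite (X :: ('n::finite, 'a::finite) Rvec set)"
  by (rule finite_subset[of _ UNIV]) auto

lemma shift_exists:
  fixes v1 v2 v3 :: "'n::finite \<Rightarrow> 'a::{finite,field}"
  assumes "X = P1 \<times> P2 \<times> P3"
    and inv1: "\<And>c w. w \<in> P1 \<Longrightarrow> w(i := w i + c) \<in> P1"
    and inv2: "\<And>c w. w \<in> P2 \<Longrightarrow> w(j := w j + c) \<in> P2"
    and inv3: "\<And>c w. w \<in> P3 \<Longrightarrow> w(k := w k + c) \<in> P3"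
    and nz: "v1 i \<noteq> 0 \<or> v2 j \<noteq> 0 \<or> v3 k \<noteq> 0"
  shows "\<exists>h. bij_betw h X X \<and> (\<forall>x\<in>X. lf v1 v2 v3 (h x) = lf v1 v2 v3 x + \<delta>)"
proof -
  define c1 where "c1 = (if v1 i \<noteq> 0 then \<delta> / v1 i else 0)"
  define c2 where "c2 = (if v1 i = 0 \<and> v2 j \<noteq> 0 then \<delta> / v2 j else 0)"
  define c3 where "c3 = (if v1 i = 0 \<and> v2 j = 0 then \<delta> / v3 k else 0)"
  define h where "h = (\<lambda>d1 d2 d3 (w1::'n\<Rightarrow>'a, w2::'n\<Rightarrow>'a, w3::'n\<Rightarrow>'a).
     (w1(i := w1 i + d1), w2(j := w2 j + d2), w3(k := w3 k + d3)))"
  have hX: "h d1 d2 d3 x \<in> X" if "x \<in> X" for d1 d2 d3 x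
    using that inv1 inv2 inv3 assms(1) by (auto simp: h_def split: prod.splits)
  have hinv: "h (-d1) (-d2) (-d3) (h d1 d2 d3 x) = x" for d1 d2 d3 x
    by (auto simp: h_def split: prod.splits)
  have "bij_betw (h c1 c2 c3) X X"
    by (rule bij_betwI[of _ _ _ "h (-c1) (-c2) (-c3)"]) (auto intro: hX simp: hinv[of c1 c2 c3] hinv[of "-c1" "-c2" "-c3", simplified])
  moreover have "lf v1 v2 v3 (h c1 c2 c3 x) = lf v1 v2 v3 x + \<delta>" for x
  proof -
    obtain w1 w2 w3 where x: "x = (w1, w2, w3)" by (cases x) auto
    have "lf v1 v2 v3 (h c1 c2 c3 x) = lf v1 v2 v3 x + (v1 i * c1 + v2 j * c2 + v3 k * c3)"
      by (simp add: x h_def lf_def dotp_upd algebra_simps)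
    also have "v1 i * c1 + v2 j * c2 + v3 k * c3 = \<delta>"
      using nz by (auto simp: c1_def c2_def c3_def)
    finally show ?thesis .
  qed
  ultimately show ?thesis by blast
qed

lemma Delta_inv: "i \<in> P \<Longrightarrow> w \<in> Delta P \<Longrightarrow> w(i := x) \<in> Delta P"
  by (rule Delta_upd)

lemma count_nz:
  fixes v1 v2 v3 :: "'n::finite \<Rightarrow> 'a::{finite,field}"
  assumes "A \<noteq> {}" "B \<noteq> {}" "C \<noteq> {}"
    and nz: "(\<exists>i\<in>A. v1 i \<noteq> 0) \<or> (\<exists>i\<in>B. v2 i \<noteq> 0) \<or> (\<exists>i\<in>C. v3 i \<noteq> 0)"
  shows "card {s \<in> S1 A B C. lf v1 v2 v3 s \<noteq> 0} * CARD('a) = (CARD('a) - 1) * card (S1 A B C :: ('n,'a) Rvec set)"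
proof (rule shift_count)
  fix \<delta> :: 'a
  obtain i j k where ijk: "i \<in> A" "j \<in> B" "k \<in> C" "v1 i \<noteq> 0 \<or> v2 j \<noteq> 0 \<or> v3 k \<noteq> 0"
    using assms by blast
  show "\<exists>h. bij_betw h (S1 A B C) (S1 A B C) \<and> (\<forall>x\<in>S1 A B C. lf v1 v2 v3 (h x) = lf v1 v2 v3 x + \<delta>)"
    by (rule shift_exists[where i=i and j=j and k=k, OF S1_eq])
       (use ijk in \<open>auto intro: Delta_upd DeltaC_upd\<close>)
qed simp

lemma count_C0:
  fixes v1 v2 v3 :: "'n::finite \<Rightarrow> 'a::{finite,field}"
  assumes "A \<noteq> {}" "B \<noteq> {}"
    and z: "\<forall>i\<in>A. v1 i = 0" "\<forall>i\<in>B. v2 i = 0" "\<forall>i\<in>C. v3 i = 0"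
    and nz: "v3 k \<noteq> 0"
  shows "card {s \<in> S1 A B C. lf v1 v2 v3 s \<noteq> 0} * CARD('a)
     = (CARD('a) - 1) * (CARD('a) ^ card A * CARD('a) ^ card B * CARD('a) ^ CARD('n))"
proof -
  let ?X = "(Delta A :: ('n \<Rightarrow> 'a) set) \<times> (Delta B :: ('n \<Rightarrow> 'a) set) \<times> (UNIV :: ('n \<Rightarrow> 'a) set)"
  have eq: "{s \<in> S1 A B C. lf v1 v2 v3 s \<noteq> 0} = {s \<in> ?X. lf v1 v2 v3 s \<noteq> 0}"
  proof -
    have "lf v1 v2 v3 s = dotp v3 (snd (snd s))" if "s \<in> ?X" for s
      using that z dotp_zero_Delta[of _ A v1] dotp_zero_Delta[of _ B v2] by (auto simp: lf_def)
    moreover have "dotp v3 w = 0" if "w \<in> Delta C" for w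
      using that z dotp_zero_Delta by blast
    ultimately show ?thesis unfolding S1_eq DeltaC_def by auto
  qed
  obtain i j where ij: "i \<in> A" "j \<in> B" using assms by blast
  have ex: "\<exists>h. bij_betw h ?X ?X \<and> (\<forall>x\<in>?X. lf v1 v2 v3 (h x) = lf v1 v2 v3 x + \<delta>)" for \<delta>
    by (rule shift_exists[where i=i and j=j and k=k, OF refl]) (use nz in \<open>auto intro: Delta_upd ij\<close>)
  have "card {s \<in> ?X. lf v1 v2 v3 s \<noteq> 0} * CARD('a) = (CARD('a) - 1) * card ?X"
    by (rule shift_count[of ?X "lf v1 v2 v3", OF _ ex]) simp
  moreover have "card ?X = CARD('a) ^ card A * CARD('a) ^ card B * CARD('a) ^ CARD('n)"
    by (simp add: card_cartesian_product card_Delta card_fun_UNIV)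
  ultimately show ?thesis using eq by simp
qed

lemma count_zero:
  fixes v1 v2 v3 :: "'n::finite \<Rightarrow> 'a::{finite,field}"
  assumes z: "\<forall>i\<in>A. v1 i = 0" "\<forall>i\<in>B. v2 i = 0" "v3 = 0"
  shows "card {s \<in> S1 A B C. lf v1 v2 v3 s \<noteq> 0} = 0"
proof -
  have "lf v1 v2 v3 s = 0" if "s \<in> S1 A B C" for s
    using that z dotp_zero_Delta[of _ A v1] dotp_zero_Delta[of _ B v2] by (auto simp: lf_def S1_eq)
  then show ?thesis by auto
qed


lemma card_ge2: "CARD('a::{finite,field}) \<ge> 2"
proof -
  have "card {0::'a, 1} = 2" by simp
  moreover have "card {0::'a, 1} \<le> CARD('a)" by (rule card_mono) auto
  ultimately show ?thesis by simp
qed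

definition Wt :: "nat \<Rightarrow> nat \<Rightarrow> nat \<Rightarrow> nat \<Rightarrow> nat \<Rightarrow> nat" where
  "Wt q m a b c = (q - 1) * q ^ (a + b - 1) * (q ^ m - q ^ c)"

definition Xt :: "nat \<Rightarrow> nat \<Rightarrow> nat \<Rightarrow> nat \<Rightarrow> nat" where
  "Xt q m a b = (q - 1) * q ^ (m + a + b - 1)"

lemma Wt_mult: "a + b \<ge> 1 \<Longrightarrow> Wt q m a b c * q = (q - 1) * (q ^ a * q ^ b * (q ^ m - q ^ c))"
proof -
  assume "a + b \<ge> 1"
  then have "q ^ (a + b - 1) * q = q ^ a * q ^ b"
    by (cases "a + b") (auto simp: power_add[symmetric])
  have "Wt q m a b c * q = (q - 1) * (q ^ (a + b - 1) * q) * (q ^ m - q ^ c)"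
    unfolding Wt_def by (simp only: ac_simps)
  also have "\<dots> = (q - 1) * (q ^ a * q ^ b * (q ^ m - q ^ c))"
    unfolding \<open>q ^ (a + b - 1) * q = q ^ a * q ^ b\<close> by (simp only: ac_simps)
  finally show ?thesis .
qed

lemma Xt_mult: "a + b \<ge> 1 \<Longrightarrow> Xt q m a b * q = (q - 1) * (q ^ a * q ^ b * q ^ m)"
proof -
  assume "a + b \<ge> 1"
  then have "q ^ (m + a + b - 1) * q = q ^ a * q ^ b * q ^ m"
  proof -
    have e: "m + a + b - 1 + 1 = m + a + b" using \<open>a + b \<ge> 1\<close> by arith
    have "q ^ (m + a + b - 1) * q = q ^ (m + a + b - 1 + 1)" by simp
    also have "\<dots> = q ^ a * q ^ b * q ^ m" unfolding e by (simp add: power_add ac_simps)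
    finally show ?thesis .
  qed
  have "Xt q m a b * q = (q - 1) * (q ^ (m + a + b - 1) * q)"
    unfolding Xt_def by (simp only: ac_simps)
  then show ?thesis
    unfolding \<open>q ^ (m + a + b - 1) * q = q ^ a * q ^ b * q ^ m\<close> .
qed

lemma Wt_pos: "q \<ge> 2 \<Longrightarrow> c < m \<Longrightarrow> Wt q m a b c > 0"
  unfolding Wt_def by (simp add: power_strict_increasing)

lemma Wt_less_Xt: "q \<ge> 2 \<Longrightarrow> a + b \<ge> 1 \<Longrightarrow> Wt q m a b c < Xt q m a b"
proof -
  assume q: "q \<ge> 2" and ab: "a + b \<ge> 1"
  have "q ^ (m + a + b - 1) = q ^ (a + b - 1) * q ^ m"
  proof -
    have e: "m + a + b - 1 = (a + b - 1) + m" using ab by arith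
    show ?thesis unfolding e by (simp add: power_add)
  qed
  moreover have "q ^ m - q ^ c < q ^ m" using q by simp
  moreover have "q ^ (a + b - 1) > 0" "q - 1 > 0" using q by auto
  ultimately show ?thesis unfolding Wt_def Xt_def by simp
qed

lemma card_S1: "card (S1 A B C :: ('n::finite, 'a::{finite,field}) Rvec set)
   = CARD('a) ^ card A * CARD('a) ^ card B * (CARD('a) ^ CARD('n) - CARD('a) ^ card C)"
  by (simp add: S1_eq card_cartesian_product card_Delta card_DeltaC)

lemma cnt_val:
  fixes v1 v2 v3 :: "'n::finite \<Rightarrow> 'a::{finite,field}"
  assumes "A \<noteq> {}" "B \<noteq> {}" "C \<noteq> {}"
  shows "card {s \<in> S1 A B C. lf v1 v2 v3 s \<noteq> 0} =
    (if (\<exists>i\<in>A. v1 i \<noteq> 0) \<or> (\<exists>i\<in>B. v2 i \<noteq> 0) \<or> (\<exists>i\<in>C. v3 i \<noteq> 0)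
     then Wt CARD('a) CARD('n) (card A) (card B) (card C)
     else if v3 \<noteq> 0 then Xt CARD('a) CARD('n) (card A) (card B) else 0)"
proof -
  have "card A > 0" using assms(1) by (simp add: card_gt_0_iff)
  then have ab: "card A + card B \<ge> 1" by linarith
  have q: "CARD('a) > 0" using card_ge2[where 'a='a] by simp
  show ?thesis
  proof (cases "(\<exists>i\<in>A. v1 i \<noteq> 0) \<or> (\<exists>i\<in>B. v2 i \<noteq> 0) \<or> (\<exists>i\<in>C. v3 i \<noteq> 0)")
    case True
    have "card {s \<in> S1 A B C. lf v1 v2 v3 s \<noteq> 0} * CARD('a) = Wt CARD('a) CARD('n) (card A) (card B) (card C) * CARD('a)"
      using count_nz[OF assms True] Wt_mult[OF ab] card_S1[of A B C, where 'a='a] by simp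
    then show ?thesis using True q by simp
  next
    case False
    show ?thesis
    proof (cases "v3 = 0")
      case True
      then show ?thesis using False count_zero[of A v1 B v2 v3 C] by auto
    next
      case v3: False
      then obtain k where k: "v3 k \<noteq> 0" by (auto simp: fun_eq_iff)
      have "card {s \<in> S1 A B C. lf v1 v2 v3 s \<noteq> 0} * CARD('a) = Xt CARD('a) CARD('n) (card A) (card B) * CARD('a)"
      proof -
        have z: "\<forall>i\<in>A. v1 i = 0" "\<forall>i\<in>B. v2 i = 0" "\<forall>i\<in>C. v3 i = 0" using False by auto
        show ?thesis using count_C0[OF assms(1,2) z k] Xt_mult[OF ab, of "CARD('a)" "CARD('n)"] by simp
      qed
      then show ?thesis using False v3 q by simp
    qed
  qed
qed

definition cw :: "'n set \<Rightarrow> 'n set \<Rightarrow> 'n set \<Rightarrow> ('n::finite, 'a::comm_ring) Rvec \<Rightarrow> (('n, 'a) Rvec \<times> bool \<Rightarrow> 'a)" where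
  "cw A B C r = gray (S1 A B C) (\<lambda>s. if s \<in> S1 A B C then rinner r s else (0, 0))"

lemma code_eq: "Phi (S1 A B C) (codeR (S1 A B C)) = range (cw A B C)"
  unfolding Phi_def codeR_def cw_def by auto

lemma cw_apply: "cw A B C (\<alpha>, \<beta>, \<gamma>) (s, b) =
  (if s \<in> S1 A B C then (if b then lf (\<alpha> + \<beta>) \<alpha> \<gamma> s else lf \<beta> \<alpha> \<gamma> s) else 0)"
  by (cases s) (auto simp: cw_def gray_def rinner_def lf_def dotp_add_left algebra_simps)

lemma wt_cw:
  fixes \<alpha> \<beta> \<gamma> :: "'n::finite \<Rightarrow> 'a::{finite,field}"
  shows "wtH (cw A B C (\<alpha>, \<beta>, \<gamma>)) = card {s \<in> S1 A B C. lf \<beta> \<alpha> \<gamma> s \<noteq> 0} + card {s \<in> S1 A B C. lf (\<alpha> + \<beta>) \<alpha> \<gamma> s \<noteq> 0}"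
proof -
  let ?E = "{s \<in> S1 A B C. lf \<beta> \<alpha> \<gamma> s \<noteq> 0}" and ?F = "{s \<in> S1 A B C. lf (\<alpha> + \<beta>) \<alpha> \<gamma> s \<noteq> 0}"
  have "{p. cw A B C (\<alpha>, \<beta>, \<gamma>) p \<noteq> 0} = (\<lambda>s. (s, False)) ` ?E \<union> (\<lambda>s. (s, True)) ` ?F"
  proof (rule set_eqI)
    fix p :: "('n, 'a) Rvec \<times> bool"
    obtain s b where p: "p = (s, b)" by (cases p)
    have i1: "(s, True) \<in> (\<lambda>s. (s, False)) ` ?E \<union> (\<lambda>s. (s, True)) ` ?F \<longleftrightarrow> s \<in> ?F" by blast
    have i2: "(s, False) \<in> (\<lambda>s. (s, False)) ` ?E \<union> (\<lambda>s. (s, True)) ` ?F \<longleftrightarrow> s \<in> ?E" by blast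
    have c1: "(s, True) \<in> {p. cw A B C (\<alpha>, \<beta>, \<gamma>) p \<noteq> 0} \<longleftrightarrow> s \<in> ?F" by (simp add: cw_apply)
    have c2: "(s, False) \<in> {p. cw A B C (\<alpha>, \<beta>, \<gamma>) p \<noteq> 0} \<longleftrightarrow> s \<in> ?E" by (simp add: cw_apply)
    show "p \<in> {p. cw A B C (\<alpha>, \<beta>, \<gamma>) p \<noteq> 0} \<longleftrightarrow> p \<in> (\<lambda>s. (s, False)) ` ?E \<union> (\<lambda>s. (s, True)) ` ?F"
      unfolding p by (cases b) (simp only: i1 c1, simp only: i2 c2)
  qed
  moreover have "card ((\<lambda>s. (s, False)) ` ?E \<union> (\<lambda>s. (s, True)) ` ?F) = card ?E + card ?F"
  proof -
    have "card ((\<lambda>s. (s, False)) ` ?E \<union> (\<lambda>s. (s, True)) ` ?F) = card ((\<lambda>s. (s, False)) ` ?E) + card ((\<lambda>s. (s, True)) ` ?F)"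
      by (rule card_Un_disjoint) auto
    moreover have "card ((\<lambda>s. (s, False)) ` ?E) = card ?E" by (rule card_image) (auto simp: inj_on_def)
    moreover have "card ((\<lambda>s. (s, True)) ` ?F) = card ?F" by (rule card_image) (auto simp: inj_on_def)
    ultimately show ?thesis by simp
  qed
  ultimately show ?thesis unfolding wtH_def by simp
qed


definition PP :: "'n set \<Rightarrow> 'n set \<Rightarrow> 'n set \<Rightarrow> ('n \<Rightarrow> 'a::zero) \<Rightarrow> ('n \<Rightarrow> 'a) \<Rightarrow> ('n \<Rightarrow> 'a) \<Rightarrow> bool" where
  "PP A B C v1 v2 v3 \<longleftrightarrow> (\<exists>i\<in>A. v1 i \<noteq> 0) \<or> (\<exists>i\<in>B. v2 i \<noteq> 0) \<or> (\<exists>i\<in>C. v3 i \<noteq> 0)"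

definition val :: "nat \<Rightarrow> nat \<Rightarrow> bool \<Rightarrow> bool \<Rightarrow> bool \<Rightarrow> nat" where
  "val W X p1 p2 g = (if p1 then W else if g then X else 0) + (if p2 then W else if g then X else 0)"

lemma val_cases:
  assumes "0 < W" "W < X"
  shows "val W X p1 p2 g = 0 \<longleftrightarrow> \<not> p1 \<and> \<not> p2 \<and> \<not> g"
    and "val W X p1 p2 g = W \<longleftrightarrow> p1 \<noteq> p2 \<and> \<not> g"
    and "val W X p1 p2 g = 2 * W \<longleftrightarrow> p1 \<and> p2"
    and "val W X p1 p2 g = W + X \<longleftrightarrow> p1 \<noteq> p2 \<and> g"
    and "val W X p1 p2 g = 2 * X \<longleftrightarrow> \<not> p1 \<and> \<not> p2 \<and> g"
    and "val W X p1 p2 g \<in> {0, W, 2 * W, W + X, 2 * X}"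
  using assms unfolding val_def by auto

lemma wt_formula:
  fixes \<alpha> \<beta> \<gamma> :: "'n::finite \<Rightarrow> 'a::{finite,field}"
  assumes "A \<noteq> {}" "B \<noteq> {}" "C \<noteq> {}"
  shows "wtH (cw A B C (\<alpha>, \<beta>, \<gamma>)) = val (Wt CARD('a) CARD('n) (card A) (card B) (card C)) (Xt CARD('a) CARD('n) (card A) (card B))
     (PP A B C \<beta> \<alpha> \<gamma>) (PP A B C (\<alpha> + \<beta>) \<alpha> \<gamma>) (\<gamma> \<noteq> 0)"
  unfolding wt_cw cnt_val[OF assms] val_def PP_def by simp

lemma lf_diff: "lf (u1 - v1) (u2 - v2) (u3 - v3) s = lf u1 u2 u3 s - lf v1 v2 v3 s"
  by (simp add: lf_def dotp_diff_left)

lemma lf_add: "lf (u1 + v1) (u2 + v2) (u3 + v3) s = lf u1 u2 u3 s + lf v1 v2 v3 s"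
  by (simp add: lf_def dotp_add_left)

lemma lf_scale: "lf (\<lambda>i. k * u1 i) (\<lambda>i. k * u2 i) (\<lambda>i. k * u3 i) s = k * lf u1 u2 u3 s"
  by (simp add: lf_def dotp_scale_left algebra_simps)

lemma cw_diff:
  fixes \<alpha> \<beta> \<gamma> \<alpha>' \<beta>' \<gamma>' :: "'n::finite \<Rightarrow> 'a::{finite,field}"
  shows "cw A B C (\<alpha> - \<alpha>', \<beta> - \<beta>', \<gamma> - \<gamma>') = cw A B C (\<alpha>, \<beta>, \<gamma>) - cw A B C (\<alpha>', \<beta>', \<gamma>')"
proof (rule ext)
  fix p :: "('n, 'a) Rvec \<times> bool"
  obtain s b where p: "p = (s, b)" by (cases p)
  have eq: "\<alpha> - \<alpha>' + (\<beta> - \<beta>') = (\<alpha> + \<beta>) - (\<alpha>' + \<beta>')" by (simp add: algebra_simps)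
  have e1: "lf (\<alpha> - \<alpha>' + (\<beta> - \<beta>')) (\<alpha> - \<alpha>') (\<gamma> - \<gamma>') s = lf (\<alpha> + \<beta>) \<alpha> \<gamma> s - lf (\<alpha>' + \<beta>') \<alpha>' \<gamma>' s"
    by (simp only: eq lf_diff)
  show "cw A B C (\<alpha> - \<alpha>', \<beta> - \<beta>', \<gamma> - \<gamma>') p = (cw A B C (\<alpha>, \<beta>, \<gamma>) - cw A B C (\<alpha>', \<beta>', \<gamma>')) p"
    unfolding p by (simp add: cw_apply lf_diff e1)
qed

lemma cw_add:
  fixes \<alpha> \<beta> \<gamma> \<alpha>' \<beta>' \<gamma>' :: "'n::finite \<Rightarrow> 'a::{finite,field}"
  shows "cw A B C (\<alpha> + \<alpha>', \<beta> + \<beta>', \<gamma> + \<gamma>') = cw A B C (\<alpha>, \<beta>, \<gamma>) + cw A B C (\<alpha>', \<beta>', \<gamma>')"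
proof (rule ext)
  fix p :: "('n, 'a) Rvec \<times> bool"
  obtain s b where p: "p = (s, b)" by (cases p)
  have eq: "\<alpha> + \<alpha>' + (\<beta> + \<beta>') = (\<alpha> + \<beta>) + (\<alpha>' + \<beta>')" by (simp add: algebra_simps)
  have e1: "lf (\<alpha> + \<alpha>' + (\<beta> + \<beta>')) (\<alpha> + \<alpha>') (\<gamma> + \<gamma>') s = lf (\<alpha> + \<beta>) \<alpha> \<gamma> s + lf (\<alpha>' + \<beta>') \<alpha>' \<gamma>' s"
    by (simp only: eq lf_add)
  have e2: "lf (\<beta> + \<beta>') (\<alpha> + \<alpha>') (\<gamma> + \<gamma>') s = lf \<beta> \<alpha> \<gamma> s + lf \<beta>' \<alpha>' \<gamma>' s"
    by (simp only: lf_add)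
  have "cw A B C (\<alpha> + \<alpha>', \<beta> + \<beta>', \<gamma> + \<gamma>') (s, b) = cw A B C (\<alpha>, \<beta>, \<gamma>) (s, b) + cw A B C (\<alpha>', \<beta>', \<gamma>') (s, b)"
    by (simp only: cw_apply e1 e2) simp
  then show "cw A B C (\<alpha> + \<alpha>', \<beta> + \<beta>', \<gamma> + \<gamma>') p = (cw A B C (\<alpha>, \<beta>, \<gamma>) + cw A B C (\<alpha>', \<beta>', \<gamma>')) p"
    unfolding p by simp
qed

lemma cw_scale:
  fixes \<alpha> \<beta> \<gamma> \<alpha>' \<beta>' \<gamma>' :: "'n::finite \<Rightarrow> 'a::{finite,field}"
  shows "cw A B C (\<lambda>i. k * \<alpha> i, \<lambda>i. k * \<beta> i, \<lambda>i. k * \<gamma> i) = fscale k (cw A B C (\<alpha>, \<beta>, \<gamma>))"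
proof (rule ext)
  fix p :: "('n, 'a) Rvec \<times> bool"
  obtain s b where p: "p = (s, b)" by (cases p)
  have eq: "(\<lambda>i. k * \<alpha> i) + (\<lambda>i. k * \<beta> i) = (\<lambda>i. k * (\<alpha> + \<beta>) i)" by (simp add: algebra_simps fun_eq_iff)
  have e1: "lf ((\<lambda>i. k * \<alpha> i) + (\<lambda>i. k * \<beta> i)) (\<lambda>i. k * \<alpha> i) (\<lambda>i. k * \<gamma> i) s = k * lf (\<alpha> + \<beta>) \<alpha> \<gamma> s"
    by (simp only: eq lf_scale)
  have e2: "lf (\<lambda>i. k * \<beta> i) (\<lambda>i. k * \<alpha> i) (\<lambda>i. k * \<gamma> i) s = k * lf \<beta> \<alpha> \<gamma> s"
    by (simp only: lf_scale)
  show "cw A B C (\<lambda>i. k * \<alpha> i, \<lambda>i. k * \<beta> i, \<lambda>i. k * \<gamma> i) p = fscale k (cw A B C (\<alpha>, \<beta>, \<gamma>)) p"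
    unfolding p by (simp only: cw_apply e1 e2 fscale_def) simp
qed

lemma wtH_zero_iff: "wtH (c :: 'i::finite \<Rightarrow> 'a::zero) = 0 \<longleftrightarrow> c = 0"
  unfolding wtH_def by (auto simp: fun_eq_iff)


lemma Delta_iff: "w \<in> Delta P \<longleftrightarrow> (\<forall>i. i \<notin> P \<longrightarrow> w i = 0)"
  by (auto simp: Delta_def supp_def)

lemma card_T: "card (Delta (A \<union> B) \<times> Delta A \<times> (UNIV :: ('n::finite \<Rightarrow> 'a::{finite,field}) set) :: ('n, 'a) Rvec set)
   = CARD('a) ^ card (A \<union> B) * CARD('a) ^ card A * CARD('a) ^ CARD('n)"
  by (simp add: card_cartesian_product card_Delta card_fun_UNIV)

context
  fixes A B C :: "'n::finite set"
  assumes ne: "A \<noteq> {}" "B \<noteq> {}" "C \<noteq> {}" and cm: "card C < CARD('n)" and nAB: "\<not> A \<subseteq> B"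
begin

lemma WX: "0 < Wt CARD('a::{finite,field}) CARD('n) (card A) (card B) (card C)"
  "Wt CARD('a::{finite,field}) CARD('n) (card A) (card B) (card C) < Xt CARD('a) CARD('n) (card A) (card B)"
proof -
  have "card A > 0" using ne(1) by (simp add: card_gt_0_iff)
  then have ab: "card A + card B \<ge> 1" by linarith
  show "0 < Wt CARD('a::{finite,field}) CARD('n) (card A) (card B) (card C)"
    using Wt_pos[OF card_ge2 cm] .
  show "Wt CARD('a::{finite,field}) CARD('n) (card A) (card B) (card C) < Xt CARD('a) CARD('n) (card A) (card B)"
    using Wt_less_Xt[OF card_ge2 ab] .
qed

lemma wt_val:
  fixes \<alpha> \<beta> \<gamma> :: "'n \<Rightarrow> 'a::{finite,field}"
  shows "wtH (cw A B C (\<alpha>, \<beta>, \<gamma>)) = val (Wt CARD('a) CARD('n) (card A) (card B) (card C)) (Xt CARD('a) CARD('n) (card A) (card B))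
     (PP A B C \<beta> \<alpha> \<gamma>) (PP A B C (\<alpha> + \<beta>) \<alpha> \<gamma>) (\<gamma> \<noteq> 0)"
  by (rule wt_formula[OF ne])

lemma cw_zero:
  fixes \<alpha> \<beta> \<gamma> :: "'n \<Rightarrow> 'a::{finite,field}"
  assumes "cw A B C (\<alpha>, \<beta>, \<gamma>) = 0"
  shows "\<not> PP A B C \<beta> \<alpha> \<gamma> \<and> \<not> PP A B C (\<alpha> + \<beta>) \<alpha> \<gamma> \<and> \<gamma> = 0"
proof -
  have "wtH (cw A B C (\<alpha>, \<beta>, \<gamma>)) = 0" using assms wtH_zero_iff by blast
  then show ?thesis unfolding wt_val using val_cases(1)[OF WX] by blast
qed

lemma cw_zeroI:
  fixes \<alpha> \<beta> \<gamma> :: "'n \<Rightarrow> 'a::{finite,field}"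
  assumes "\<not> PP A B C \<beta> \<alpha> \<gamma>" "\<not> PP A B C (\<alpha> + \<beta>) \<alpha> \<gamma>" "\<gamma> = 0"
  shows "cw A B C (\<alpha>, \<beta>, \<gamma>) = 0"
proof -
  have "wtH (cw A B C (\<alpha>, \<beta>, \<gamma>)) = 0" unfolding wt_val using val_cases(1)[OF WX] assms by blast
  then show ?thesis using wtH_zero_iff by blast
qed

abbreviation TT :: "('n, 'a::{finite,field}) Rvec set" where
  "TT \<equiv> Delta (A \<union> B) \<times> Delta A \<times> UNIV"

lemma inj_T: "inj_on (cw A B C) (TT :: ('n, 'a::{finite,field}) Rvec set)"
proof (rule inj_onI)
  fix t t' :: "('n, 'a) Rvec"
  assume t: "t \<in> TT" and t': "t' \<in> TT" and eq: "cw A B C t = cw A B C t'"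
  obtain \<alpha> \<beta> \<gamma> where tt: "t = (\<alpha>, \<beta>, \<gamma>)" by (cases t) auto
  obtain \<alpha>' \<beta>' \<gamma>' where tt': "t' = (\<alpha>', \<beta>', \<gamma>')" by (cases t') auto
  have "cw A B C (\<alpha> - \<alpha>', \<beta> - \<beta>', \<gamma> - \<gamma>') = 0" using eq unfolding cw_diff tt tt' by simp
  note zz = cw_zero[OF this, unfolded PP_def]
  have z1: "\<forall>i\<in>A. \<beta> i = \<beta>' i" using zz by auto
  have z2: "\<forall>i\<in>B. \<alpha> i = \<alpha>' i" using zz by auto
  have z3: "\<forall>i\<in>A. \<alpha> i - \<alpha>' i + (\<beta> i - \<beta>' i) = 0" using zz by auto
  have z4: "\<gamma> = \<gamma>'" using zz by auto
  have "\<alpha> = \<alpha>'"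
  proof
    fix i show "\<alpha> i = \<alpha>' i"
      using t t' z1 z2 z3 unfolding tt tt' by (cases "i \<in> A"; cases "i \<in> B") (auto simp: Delta_iff)
  qed
  moreover have "\<beta> = \<beta>'"
  proof
    fix i show "\<beta> i = \<beta>' i"
      using t t' z1 unfolding tt tt' by (cases "i \<in> A") (auto simp: Delta_iff)
  qed
  ultimately show "t = t'" using tt tt' z4 by simp
qed

lemma range_T: "range (cw A B C) = cw A B C ` (TT :: ('n, 'a::{finite,field}) Rvec set)"
proof
  show "range (cw A B C) \<subseteq> cw A B C ` (TT :: ('n, 'a) Rvec set)"
  proof
    fix c assume "c \<in> range (cw A B C :: ('n, 'a) Rvec \<Rightarrow> _)"
    then obtain \<alpha> \<beta> \<gamma> :: "'n \<Rightarrow> 'a" where c: "c = cw A B C (\<alpha>, \<beta>, \<gamma>)" by auto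
    define \<alpha>0 where "\<alpha>0 = (\<lambda>i. if i \<in> A \<union> B then \<alpha> i else 0)"
    define \<beta>0 where "\<beta>0 = (\<lambda>i. if i \<in> A then \<beta> i else 0)"
    have "cw A B C (\<alpha> - \<alpha>0, \<beta> - \<beta>0, \<gamma> - \<gamma>) = 0"
      by (rule cw_zeroI) (auto simp: PP_def \<alpha>0_def \<beta>0_def)
    then have "c = cw A B C (\<alpha>0, \<beta>0, \<gamma>)" unfolding cw_diff c by simp
    moreover have "(\<alpha>0, \<beta>0, \<gamma>) \<in> TT" by (auto simp: Delta_iff \<alpha>0_def \<beta>0_def)
    ultimately show "c \<in> cw A B C ` (TT :: ('n, 'a) Rvec set)" by blast
  qed
qed auto


definition p1 :: "('n, 'a::{finite,field}) Rvec \<Rightarrow> bool" where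
  "p1 t = PP A B C (fst (snd t)) (fst t) (snd (snd t))"
definition p2 :: "('n, 'a::{finite,field}) Rvec \<Rightarrow> bool" where
  "p2 t = PP A B C (fst t + fst (snd t)) (fst t) (snd (snd t))"

lemma wt_val_t:
  fixes t :: "('n, 'a::{finite,field}) Rvec"
  shows "wtH (cw A B C t) = val (Wt CARD('a) CARD('n) (card A) (card B) (card C)) (Xt CARD('a) CARD('n) (card A) (card B))
     (p1 t) (p2 t) (snd (snd t) \<noteq> 0)"
  by (cases t) (simp add: wt_val p1_def p2_def)

lemma E1: "{t \<in> (TT :: ('n, 'a::{finite,field}) Rvec set). \<not> p1 t \<and> p2 t \<and> Q (snd (snd t))}
  = (\<lambda>(\<alpha>, \<gamma>). (\<alpha>, 0, \<gamma>)) ` ((Delta (A - B) - {0}) \<times> {\<gamma>. (\<forall>i\<in>C. \<gamma> i = 0) \<and> Q \<gamma>})"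
proof (intro set_eqI iffI)
  fix t :: "('n, 'a) Rvec"
  assume "t \<in> {t \<in> TT. \<not> p1 t \<and> p2 t \<and> Q (snd (snd t))}"
  then obtain \<alpha> \<beta> \<gamma> where t: "t = (\<alpha>, \<beta>, \<gamma>)" and a: "\<alpha> \<in> Delta (A \<union> B)" and b: "\<beta> \<in> Delta A"
    and n1: "\<not> PP A B C \<beta> \<alpha> \<gamma>" and n2: "PP A B C (\<alpha> + \<beta>) \<alpha> \<gamma>" and q: "Q \<gamma>"
    by (cases t) (auto simp: p1_def p2_def)
  have b0: "\<beta> = 0"
  proof
    fix i show "\<beta> i = 0 i" using b n1 by (cases "i \<in> A") (auto simp: Delta_iff PP_def)
  qed
  have aB: "\<forall>i\<in>B. \<alpha> i = 0" and gC: "\<forall>i\<in>C. \<gamma> i = 0" using n1 by (auto simp: PP_def)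
  have aD: "\<alpha> \<in> Delta (A - B)" using a aB by (auto simp: Delta_iff)
  have "\<alpha> \<noteq> 0" using n2 aB gC b0 by (auto simp: PP_def)
  then show "t \<in> (\<lambda>(\<alpha>, \<gamma>). (\<alpha>, 0, \<gamma>)) ` ((Delta (A - B) - {0}) \<times> {\<gamma>. (\<forall>i\<in>C. \<gamma> i = 0) \<and> Q \<gamma>})"
    using aD gC q t b0 by (intro image_eqI[of _ _ "(\<alpha>, \<gamma>)"]) auto
next
  fix t :: "('n, 'a) Rvec"
  assume "t \<in> (\<lambda>(\<alpha>, \<gamma>). (\<alpha>, 0, \<gamma>)) ` ((Delta (A - B) - {0}) \<times> {\<gamma>. (\<forall>i\<in>C. \<gamma> i = 0) \<and> Q \<gamma>})"
  then obtain \<alpha> \<gamma> where t: "t = (\<alpha>, 0, \<gamma>)" and aD: "\<alpha> \<in> Delta (A - B)" and a0: "\<alpha> \<noteq> 0"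
    and gC: "\<forall>i\<in>C. \<gamma> i = 0" and q: "Q \<gamma>" by auto
  obtain i where i: "\<alpha> i \<noteq> 0" using a0 by (auto simp: fun_eq_iff)
  then have iA: "i \<in> A" "i \<notin> B" using aD by (auto simp: Delta_iff)
  have "\<alpha> \<in> Delta (A \<union> B)" using aD by (auto simp: Delta_iff)
  moreover have "\<not> PP A B C 0 \<alpha> \<gamma>" using aD gC by (auto simp: PP_def Delta_iff)
  moreover have "PP A B C (\<alpha> + 0) \<alpha> \<gamma>" using i iA by (auto simp: PP_def)
  ultimately show "t \<in> {t \<in> TT. \<not> p1 t \<and> p2 t \<and> Q (snd (snd t))}"
    using t q by (auto simp: p1_def p2_def Delta_iff)
qed

lemma E2: "{t \<in> (TT :: ('n, 'a::{finite,field}) Rvec set). p1 t \<and> \<not> p2 t \<and> Q (snd (snd t))}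
  = (\<lambda>(\<alpha>, \<gamma>). (\<alpha>, - \<alpha>, \<gamma>)) ` ((Delta (A - B) - {0}) \<times> {\<gamma>. (\<forall>i\<in>C. \<gamma> i = 0) \<and> Q \<gamma>})"
proof (intro set_eqI iffI)
  fix t :: "('n, 'a) Rvec"
  assume "t \<in> {t \<in> TT. p1 t \<and> \<not> p2 t \<and> Q (snd (snd t))}"
  then obtain \<alpha> \<beta> \<gamma> where t: "t = (\<alpha>, \<beta>, \<gamma>)" and a: "\<alpha> \<in> Delta (A \<union> B)" and b: "\<beta> \<in> Delta A"
    and n1: "PP A B C \<beta> \<alpha> \<gamma>" and n2: "\<not> PP A B C (\<alpha> + \<beta>) \<alpha> \<gamma>" and q: "Q \<gamma>"
    by (cases t) (auto simp: p1_def p2_def)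
  have aB: "\<forall>i\<in>B. \<alpha> i = 0" and gC: "\<forall>i\<in>C. \<gamma> i = 0" and abA: "\<forall>i\<in>A. \<alpha> i + \<beta> i = 0"
    using n2 by (auto simp: PP_def)
  have aD: "\<alpha> \<in> Delta (A - B)" using a aB by (auto simp: Delta_iff)
  have bm: "\<beta> = - \<alpha>"
  proof
    fix i show "\<beta> i = (- \<alpha>) i"
    proof (cases "i \<in> A")
      case True then show ?thesis using abA by (simp add: eq_neg_iff_add_eq_0 add.commute)
    next
      case False then show ?thesis using b aD by (auto simp: Delta_iff)
    qed
  qed
  have "\<alpha> \<noteq> 0" using n1 aB gC bm by (auto simp: PP_def)
  then show "t \<in> (\<lambda>(\<alpha>, \<gamma>). (\<alpha>, - \<alpha>, \<gamma>)) ` ((Delta (A - B) - {0}) \<times> {\<gamma>. (\<forall>i\<in>C. \<gamma> i = 0) \<and> Q \<gamma>})"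
    using aD gC q t bm by (intro image_eqI[of _ _ "(\<alpha>, \<gamma>)"]) auto
next
  fix t :: "('n, 'a) Rvec"
  assume "t \<in> (\<lambda>(\<alpha>, \<gamma>). (\<alpha>, - \<alpha>, \<gamma>)) ` ((Delta (A - B) - {0}) \<times> {\<gamma>. (\<forall>i\<in>C. \<gamma> i = 0) \<and> Q \<gamma>})"
  then obtain \<alpha> \<gamma> where t: "t = (\<alpha>, - \<alpha>, \<gamma>)" and aD: "\<alpha> \<in> Delta (A - B)" and a0: "\<alpha> \<noteq> 0"
    and gC: "\<forall>i\<in>C. \<gamma> i = 0" and q: "Q \<gamma>" by auto
  obtain i where i: "\<alpha> i \<noteq> 0" using a0 by (auto simp: fun_eq_iff)
  then have iA: "i \<in> A" "i \<notin> B" using aD by (auto simp: Delta_iff)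
  have "\<alpha> \<in> Delta (A \<union> B)" "- \<alpha> \<in> Delta A" using aD by (auto simp: Delta_iff)
  moreover have "PP A B C (- \<alpha>) \<alpha> \<gamma>" using i iA by (auto simp: PP_def)
  moreover have "\<not> PP A B C (\<alpha> + - \<alpha>) \<alpha> \<gamma>" using aD gC by (auto simp: PP_def Delta_iff)
  ultimately show "t \<in> {t \<in> TT. p1 t \<and> \<not> p2 t \<and> Q (snd (snd t))}"
    using t q by (auto simp: p1_def p2_def)
qed

lemma E3: "{t \<in> (TT :: ('n, 'a::{finite,field}) Rvec set). \<not> p1 t \<and> \<not> p2 t \<and> Q (snd (snd t))}
  = (\<lambda>\<gamma>. (0, 0, \<gamma>)) ` {\<gamma>. (\<forall>i\<in>C. \<gamma> i = 0) \<and> Q \<gamma>}"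
proof (intro set_eqI iffI)
  fix t :: "('n, 'a) Rvec"
  assume "t \<in> {t \<in> TT. \<not> p1 t \<and> \<not> p2 t \<and> Q (snd (snd t))}"
  then obtain \<alpha> \<beta> \<gamma> where t: "t = (\<alpha>, \<beta>, \<gamma>)" and a: "\<alpha> \<in> Delta (A \<union> B)" and b: "\<beta> \<in> Delta A"
    and n1: "\<not> PP A B C \<beta> \<alpha> \<gamma>" and n2: "\<not> PP A B C (\<alpha> + \<beta>) \<alpha> \<gamma>" and q: "Q \<gamma>"
    by (cases t) (auto simp: p1_def p2_def)
  have aB: "\<forall>i\<in>B. \<alpha> i = 0" and gC: "\<forall>i\<in>C. \<gamma> i = 0" and abA: "\<forall>i\<in>A. \<alpha> i + \<beta> i = 0"
    and bA: "\<forall>i\<in>A. \<beta> i = 0"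
    using n1 n2 by (auto simp: PP_def)
  have b0: "\<beta> = 0"
  proof
    fix i show "\<beta> i = 0 i" using b bA by (cases "i \<in> A") (auto simp: Delta_iff)
  qed
  have a0: "\<alpha> = 0"
  proof
    fix i show "\<alpha> i = 0 i" using a aB abA bA by (cases "i \<in> A"; cases "i \<in> B") (auto simp: Delta_iff)
  qed
  show "t \<in> (\<lambda>\<gamma>. (0, 0, \<gamma>)) ` {\<gamma>. (\<forall>i\<in>C. \<gamma> i = 0) \<and> Q \<gamma>}"
    using t a0 b0 gC q by auto
next
  fix t :: "('n, 'a) Rvec"
  assume "t \<in> (\<lambda>\<gamma>. (0, 0, \<gamma>)) ` {\<gamma>. (\<forall>i\<in>C. \<gamma> i = 0) \<and> Q \<gamma>}"
  then obtain \<gamma> where t: "t = (0, 0, \<gamma>)" and gC: "\<forall>i\<in>C. \<gamma> i = 0" and q: "Q \<gamma>" by auto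
  then show "t \<in> {t \<in> TT. \<not> p1 t \<and> \<not> p2 t \<and> Q (snd (snd t))}"
    by (auto simp: p1_def p2_def PP_def Delta_iff)
qed


lemma card_img1:
  fixes G :: "('n \<Rightarrow> 'a::{finite,field}) set"
  shows "card ((\<lambda>(\<alpha>, \<gamma>). (\<alpha>, 0::'n \<Rightarrow> 'a::{finite,field}, \<gamma>)) ` ((Delta (A - B) - {0::'n \<Rightarrow> 'a}) \<times> G))
   = (CARD('a) ^ card (A - B) - 1) * card G"
proof -
  have "card ((\<lambda>(\<alpha>, \<gamma>). (\<alpha>, 0::'n \<Rightarrow> 'a, \<gamma>)) ` ((Delta (A - B) - {0::'n \<Rightarrow> 'a}) \<times> G)) = card ((Delta (A - B) - {0::'n \<Rightarrow> 'a}) \<times> G)"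
    by (intro card_image inj_onI) (auto split: prod.splits)
  also have "\<dots> = card (Delta (A - B) - {0::'n \<Rightarrow> 'a}) * card G" by (simp add: card_cartesian_product)
  also have "card (Delta (A - B) - {0::'n \<Rightarrow> 'a}) = CARD('a) ^ card (A - B) - 1"
    by (simp add: card_Delta Delta_iff)
  finally show ?thesis .
qed

lemma card_img2:
  fixes G :: "('n \<Rightarrow> 'a::{finite,field}) set"
  shows "card ((\<lambda>(\<alpha>, \<gamma>). (\<alpha>, - \<alpha>, \<gamma>)) ` ((Delta (A - B) - {0::'n \<Rightarrow> 'a::{finite,field}}) \<times> G))
   = (CARD('a) ^ card (A - B) - 1) * card G"
proof -
  have "card ((\<lambda>(\<alpha>, \<gamma>). (\<alpha>, - \<alpha>, \<gamma>)) ` ((Delta (A - B) - {0::'n \<Rightarrow> 'a}) \<times> G)) = card ((Delta (A - B) - {0::'n \<Rightarrow> 'a}) \<times> G)"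
    by (intro card_image inj_onI) (auto split: prod.splits)
  also have "\<dots> = card (Delta (A - B) - {0::'n \<Rightarrow> 'a}) * card G" by (simp add: card_cartesian_product)
  also have "card (Delta (A - B) - {0::'n \<Rightarrow> 'a}) = CARD('a) ^ card (A - B) - 1"
    by (simp add: card_Delta Delta_iff)
  finally show ?thesis .
qed

lemma card_img3:
  fixes G :: "('n \<Rightarrow> 'a::{finite,field}) set"
  shows "card ((\<lambda>\<gamma>. (0::'n \<Rightarrow> 'a::{finite,field}, 0::'n \<Rightarrow> 'a, \<gamma>)) ` G) = card G"
  by (rule card_image) (auto simp: inj_on_def)

lemma card_ZC0: "card {\<gamma> :: 'n \<Rightarrow> 'a::{finite,field}. (\<forall>i\<in>C. \<gamma> i = 0) \<and> \<gamma> = 0} = 1"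
proof -
  have "{\<gamma> :: 'n \<Rightarrow> 'a. (\<forall>i\<in>C. \<gamma> i = 0) \<and> \<gamma> = 0} = {0}" by auto
  then show ?thesis by simp
qed

lemma card_ZCn: "card {\<gamma> :: 'n \<Rightarrow> 'a::{finite,field}. (\<forall>i\<in>C. \<gamma> i = 0) \<and> \<gamma> \<noteq> 0} = CARD('a) ^ (CARD('n) - card C) - 1"
proof -
  have "{\<gamma> :: 'n \<Rightarrow> 'a. (\<forall>i\<in>C. \<gamma> i = 0) \<and> \<gamma> \<noteq> 0} = Delta (- C) - {0}" by (auto simp: Delta_iff)
  moreover have "card (- C) = CARD('n) - card C"
    by (metis Compl_eq_Diff_UNIV card_Diff_subset finite subset_UNIV)
  ultimately show ?thesis by (simp add: card_Delta Delta_iff)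
qed


lemma cls_W: "{t \<in> (TT :: ('n, 'a::{finite,field}) Rvec set). wtH (cw A B C t) = Wt CARD('a) CARD('n) (card A) (card B) (card C)} =
  {t \<in> TT. \<not> p1 t \<and> p2 t \<and> snd (snd t) = 0} \<union> {t \<in> TT. p1 t \<and> \<not> p2 t \<and> snd (snd t) = 0}"
  using val_cases(2)[OF WX] by (auto simp: wt_val_t)

lemma cls_WX: "{t \<in> (TT :: ('n, 'a::{finite,field}) Rvec set). wtH (cw A B C t) = Wt CARD('a) CARD('n) (card A) (card B) (card C) + Xt CARD('a) CARD('n) (card A) (card B)} =
  {t \<in> TT. \<not> p1 t \<and> p2 t \<and> snd (snd t) \<noteq> 0} \<union> {t \<in> TT. p1 t \<and> \<not> p2 t \<and> snd (snd t) \<noteq> 0}"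
  using val_cases(4)[OF WX] by (auto simp: wt_val_t)

lemma cls_2X: "{t \<in> (TT :: ('n, 'a::{finite,field}) Rvec set). wtH (cw A B C t) = 2 * Xt CARD('a) CARD('n) (card A) (card B)} =
  {t \<in> TT. \<not> p1 t \<and> \<not> p2 t \<and> snd (snd t) \<noteq> 0}"
  using val_cases(5)[OF WX] by (auto simp: wt_val_t)

lemma cls_0: "{t \<in> (TT :: ('n, 'a::{finite,field}) Rvec set). wtH (cw A B C t) = 0} =
  {t \<in> TT. \<not> p1 t \<and> \<not> p2 t \<and> snd (snd t) = 0}"
  using val_cases(1)[OF WX] by (auto simp: wt_val_t)

lemma card_cls_W: "card {t \<in> (TT :: ('n, 'a::{finite,field}) Rvec set). wtH (cw A B C t) = Wt CARD('a) CARD('n) (card A) (card B) (card C)}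
  = 2 * (CARD('a) ^ card (A - B) - 1)"
proof -
  have "card {t \<in> (TT :: ('n, 'a) Rvec set). wtH (cw A B C t) = Wt CARD('a) CARD('n) (card A) (card B) (card C)}
     = card {t \<in> (TT :: ('n, 'a) Rvec set). \<not> p1 t \<and> p2 t \<and> snd (snd t) = 0} + card {t \<in> (TT :: ('n, 'a) Rvec set). p1 t \<and> \<not> p2 t \<and> snd (snd t) = 0}"
    unfolding cls_W by (rule card_Un_disjoint) auto
  also have "\<dots> = (CARD('a) ^ card (A - B) - 1) + (CARD('a) ^ card (A - B) - 1)"
  proof -
    have "{t \<in> (TT :: ('n, 'a) Rvec set). \<not> p1 t \<and> p2 t \<and> snd (snd t) = 0}
      = (\<lambda>(\<alpha>, \<gamma>). (\<alpha>, 0, \<gamma>)) ` ((Delta (A - B) - {0}) \<times> {\<gamma>::'n \<Rightarrow> 'a. (\<forall>i\<in>C. \<gamma> i = 0) \<and> \<gamma> = 0})"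
      using E1[of "\<lambda>g. g = 0"] by (simp only:)
    note eq1 = this
    have c1: "card {t \<in> (TT :: ('n, 'a) Rvec set). \<not> p1 t \<and> p2 t \<and> snd (snd t) = 0} = CARD('a) ^ card (A - B) - 1"
      unfolding eq1 card_img1 card_ZC0 by simp
    have "{t \<in> (TT :: ('n, 'a) Rvec set). p1 t \<and> \<not> p2 t \<and> snd (snd t) = 0}
      = (\<lambda>(\<alpha>, \<gamma>). (\<alpha>, - \<alpha>, \<gamma>)) ` ((Delta (A - B) - {0}) \<times> {\<gamma>::'n \<Rightarrow> 'a. (\<forall>i\<in>C. \<gamma> i = 0) \<and> \<gamma> = 0})"
      using E2[of "\<lambda>g. g = 0"] by (simp only:)
    note eq2 = this
    have c2: "card {t \<in> (TT :: ('n, 'a) Rvec set). p1 t \<and> \<not> p2 t \<and> snd (snd t) = 0} = CARD('a) ^ card (A - B) - 1"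
      unfolding eq2 card_img2 card_ZC0 by simp
    show ?thesis using c1 c2 by simp
  qed
  finally show ?thesis by simp
qed

lemma card_cls_WX: "card {t \<in> (TT :: ('n, 'a::{finite,field}) Rvec set). wtH (cw A B C t) = Wt CARD('a) CARD('n) (card A) (card B) (card C) + Xt CARD('a) CARD('n) (card A) (card B)}
  = 2 * (CARD('a) ^ card (A - B) - 1) * (CARD('a) ^ (CARD('n) - card C) - 1)"
proof -
  have "card {t \<in> (TT :: ('n, 'a) Rvec set). wtH (cw A B C t) = Wt CARD('a) CARD('n) (card A) (card B) (card C) + Xt CARD('a) CARD('n) (card A) (card B)}
     = card {t \<in> (TT :: ('n, 'a) Rvec set). \<not> p1 t \<and> p2 t \<and> snd (snd t) \<noteq> 0} + card {t \<in> (TT :: ('n, 'a) Rvec set). p1 t \<and> \<not> p2 t \<and> snd (snd t) \<noteq> 0}"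
    unfolding cls_WX by (rule card_Un_disjoint) auto
  also have "\<dots> = (CARD('a) ^ card (A - B) - 1) * (CARD('a) ^ (CARD('n) - card C) - 1) + (CARD('a) ^ card (A - B) - 1) * (CARD('a) ^ (CARD('n) - card C) - 1)"
  proof -
    have "{t \<in> (TT :: ('n, 'a) Rvec set). \<not> p1 t \<and> p2 t \<and> snd (snd t) \<noteq> 0}
      = (\<lambda>(\<alpha>, \<gamma>). (\<alpha>, 0, \<gamma>)) ` ((Delta (A - B) - {0}) \<times> {\<gamma>::'n \<Rightarrow> 'a. (\<forall>i\<in>C. \<gamma> i = 0) \<and> \<gamma> \<noteq> 0})"
      using E1[of "\<lambda>g. g \<noteq> 0"] by (simp only:)
    note eq1 = this
    have c1: "card {t \<in> (TT :: ('n, 'a) Rvec set). \<not> p1 t \<and> p2 t \<and> snd (snd t) \<noteq> 0} = (CARD('a) ^ card (A - B) - 1) * (CARD('a) ^ (CARD('n) - card C) - 1)"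
      unfolding eq1 card_img1 card_ZCn by simp
    have "{t \<in> (TT :: ('n, 'a) Rvec set). p1 t \<and> \<not> p2 t \<and> snd (snd t) \<noteq> 0}
      = (\<lambda>(\<alpha>, \<gamma>). (\<alpha>, - \<alpha>, \<gamma>)) ` ((Delta (A - B) - {0}) \<times> {\<gamma>::'n \<Rightarrow> 'a. (\<forall>i\<in>C. \<gamma> i = 0) \<and> \<gamma> \<noteq> 0})"
      using E2[of "\<lambda>g. g \<noteq> 0"] by (simp only:)
    note eq2 = this
    have c2: "card {t \<in> (TT :: ('n, 'a) Rvec set). p1 t \<and> \<not> p2 t \<and> snd (snd t) \<noteq> 0} = (CARD('a) ^ card (A - B) - 1) * (CARD('a) ^ (CARD('n) - card C) - 1)"
      unfolding eq2 card_img2 card_ZCn by simp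
    show ?thesis using c1 c2 by simp
  qed
  finally show ?thesis by simp
qed

lemma card_cls_2X: "card {t \<in> (TT :: ('n, 'a::{finite,field}) Rvec set). wtH (cw A B C t) = 2 * Xt CARD('a) CARD('n) (card A) (card B)}
  = CARD('a) ^ (CARD('n) - card C) - 1"
proof -
  have "{t \<in> (TT :: ('n, 'a) Rvec set). \<not> p1 t \<and> \<not> p2 t \<and> snd (snd t) \<noteq> 0}
      = (\<lambda>\<gamma>. (0, 0, \<gamma>)) ` {\<gamma>::'n \<Rightarrow> 'a. (\<forall>i\<in>C. \<gamma> i = 0) \<and> \<gamma> \<noteq> 0}"
    using E3[of "\<lambda>g. g \<noteq> 0"] by (simp only:)
  note eq = this
  show ?thesis unfolding cls_2X eq card_img3 card_ZCn by simp
qed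

lemma card_cls_0: "card {t \<in> (TT :: ('n, 'a::{finite,field}) Rvec set). wtH (cw A B C t) = 0} = 1"
proof -
  have "{t \<in> (TT :: ('n, 'a) Rvec set). \<not> p1 t \<and> \<not> p2 t \<and> snd (snd t) = 0}
      = (\<lambda>\<gamma>. (0, 0, \<gamma>)) ` {\<gamma>::'n \<Rightarrow> 'a. (\<forall>i\<in>C. \<gamma> i = 0) \<and> \<gamma> = 0}"
    using E3[of "\<lambda>g. g = 0"] by (simp only:)
  note eq = this
  show ?thesis unfolding cls_0 eq card_img3 card_ZC0 by simp
qed

lemma card_partition_list:
  assumes "finite T" "\<forall>t\<in>T. f t \<in> set vs" "distinct vs"
  shows "card T = sum_list (map (\<lambda>v. card {t\<in>T. f t = v}) vs)"
proof -
  have "T = (\<Union>v\<in>set vs. {t\<in>T. f t = v})" using assms(2) by auto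
  then have "card T = (\<Sum>v\<in>set vs. card {t\<in>T. f t = v})"
    using card_UN_disjoint[of "set vs" "\<lambda>v. {t\<in>T. f t = v}"] assms(1) by auto
  also have "\<dots> = sum_list (map (\<lambda>v. card {t\<in>T. f t = v}) vs)"
    using assms(3) by (rule sum.distinct_set_conv_list)
  finally show ?thesis .
qed

lemma card_TT_partition: "card (TT :: ('n, 'a::{finite,field}) Rvec set) =
   1 + card {t \<in> (TT :: ('n, 'a) Rvec set). wtH (cw A B C t) = Wt CARD('a) CARD('n) (card A) (card B) (card C)}
     + card {t \<in> (TT :: ('n, 'a) Rvec set). wtH (cw A B C t) = 2 * Wt CARD('a) CARD('n) (card A) (card B) (card C)}
     + card {t \<in> (TT :: ('n, 'a) Rvec set). wtH (cw A B C t) = Wt CARD('a) CARD('n) (card A) (card B) (card C) + Xt CARD('a) CARD('n) (card A) (card B)}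
     + card {t \<in> (TT :: ('n, 'a) Rvec set). wtH (cw A B C t) = 2 * Xt CARD('a) CARD('n) (card A) (card B)}"
proof -
  have w1: "0 < Wt CARD('a) CARD('n) (card A) (card B) (card C)" by (rule WX(1))
  have w2: "Wt CARD('a) CARD('n) (card A) (card B) (card C) < Xt CARD('a) CARD('n) (card A) (card B)" by (rule WX(2))
  have d: "distinct [0, Wt CARD('a) CARD('n) (card A) (card B) (card C), 2 * Wt CARD('a) CARD('n) (card A) (card B) (card C), Wt CARD('a) CARD('n) (card A) (card B) (card C) + Xt CARD('a) CARD('n) (card A) (card B), 2 * Xt CARD('a) CARD('n) (card A) (card B)]"
    using w1 w2 by auto
  have "card (TT :: ('n, 'a) Rvec set) = sum_list (map (\<lambda>v. card {t \<in> (TT :: ('n, 'a) Rvec set). wtH (cw A B C t) = v}) [0, Wt CARD('a) CARD('n) (card A) (card B) (card C), 2 * Wt CARD('a) CARD('n) (card A) (card B) (card C), Wt CARD('a) CARD('n) (card A) (card B) (card C) + Xt CARD('a) CARD('n) (card A) (card B), 2 * Xt CARD('a) CARD('n) (card A) (card B)])"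
    by (rule card_partition_list[OF _ _ d]) (use val_cases(6)[OF w1 w2] in \<open>auto simp: wt_val_t\<close>)
  then show ?thesis using card_cls_0 by simp
qed

end


lemma sum_const0: "(\<Sum>t\<in>(UNIV::'a::{finite,field} set). (c::'a)) = 0"
  by (simp only: sum_constant ofnat_card_zero mult_zero_left)

lemma s_lin: "(\<Sum>t\<in>(UNIV::'a::{finite,field} set). P + t * a) = (\<Sum>t\<in>UNIV. t) * a"
  by (simp only: sum.distrib sum_const0 sum_distrib_right add_0_left)

lemma s_quad: "(\<Sum>t\<in>(UNIV::'a::{finite,field} set). (P + t * a) * (Q + t * b))
   = (\<Sum>t\<in>UNIV. t) * (P * b + a * Q) + (\<Sum>t\<in>UNIV. t * t) * (a * b)"
proof -
  have "(\<Sum>t\<in>(UNIV::'a set). (P + t * a) * (Q + t * b)) = (\<Sum>t\<in>(UNIV::'a set). P * Q + t * (P * b + a * Q) + (t * t) * (a * b))"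
    by (rule sum.cong) (auto simp: algebra_simps)
  also have "\<dots> = (\<Sum>t\<in>UNIV. t) * (P * b + a * Q) + (\<Sum>t\<in>UNIV. t * t) * (a * b)"
    by (simp only: sum.distrib sum_const0 sum_distrib_right add_0_left)
  finally show ?thesis .
qed

lemma cubic_sum:
  fixes L M a1 a2 a3 b1 b2 b3 :: "'a::{finite,field}"
  shows "(\<Sum>t1\<in>UNIV. \<Sum>t2\<in>UNIV. \<Sum>t3\<in>UNIV.
     (L + t1 * a1 + t2 * a2 + t3 * a3) * (M + t1 * b1 + t2 * b2 + t3 * b3)) = 0"
proof -
  define S1 where "S1 = (\<Sum>t\<in>(UNIV::'a set). t)"
  define S2 where "S2 = (\<Sum>t\<in>(UNIV::'a set). t * t)"
  have h3: "(\<Sum>t3\<in>UNIV. (L + t1 * a1 + t2 * a2 + t3 * a3) * (M + t1 * b1 + t2 * b2 + t3 * b3))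
     = (S1 * ((L + t1 * a1) * b3 + a3 * (M + t1 * b1)) + S2 * (a3 * b3)) + t2 * (S1 * (a2 * b3 + a3 * b2))" for t1 t2
  proof -
    have "(\<Sum>t3\<in>UNIV. (L + t1 * a1 + t2 * a2 + t3 * a3) * (M + t1 * b1 + t2 * b2 + t3 * b3))
      = S1 * ((L + t1 * a1 + t2 * a2) * b3 + a3 * (M + t1 * b1 + t2 * b2)) + S2 * (a3 * b3)"
      unfolding S1_def S2_def by (rule s_quad)
    then show ?thesis by (simp add: algebra_simps)
  qed
  have h2: "(\<Sum>t2\<in>UNIV. \<Sum>t3\<in>UNIV. (L + t1 * a1 + t2 * a2 + t3 * a3) * (M + t1 * b1 + t2 * b2 + t3 * b3))
     = S1 * (S1 * (a2 * b3 + a3 * b2))" for t1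
    unfolding h3 S1_def by (rule s_lin)
  show ?thesis unfolding h2 by (rule sum_const0)
qed


lemma sum_UNIV3: "(\<Sum>t\<in>(UNIV::('a \<times> 'b \<times> 'c) set). f t) = (\<Sum>t1\<in>UNIV. \<Sum>t2\<in>UNIV. \<Sum>t3\<in>UNIV. f (t1, t2, t3))"
proof -
  have "(\<Sum>t\<in>(UNIV::('a \<times> 'b \<times> 'c) set). f t) = (\<Sum>t\<in>UNIV \<times> UNIV \<times> UNIV. f t)" by simp
  also have "\<dots> = (\<Sum>t1\<in>UNIV. \<Sum>t23\<in>UNIV \<times> UNIV. f (t1, t23))" by (rule sum.cartesian_product')
  also have "\<dots> = (\<Sum>t1\<in>UNIV. \<Sum>t2\<in>UNIV. \<Sum>t3\<in>UNIV. f (t1, t2, t3))"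
    by (rule sum.cong[OF refl]) (rule sum.cartesian_product')
  finally show ?thesis .
qed

lemma Q0:
  fixes u1 u2 u3 v1 v2 v3 :: "'n::finite \<Rightarrow> 'a::{finite,field}"
  assumes i: "i \<in> P1" and j: "j \<in> P2" and k: "k \<in> P3"
  shows "(\<Sum>s\<in>(Delta P1 \<times> Delta P2 \<times> Delta P3 :: ('n, 'a) Rvec set). lf u1 u2 u3 s * lf v1 v2 v3 s) = 0"
proof -
  let ?X = "(Delta P1 \<times> Delta P2 \<times> Delta P3 :: ('n, 'a) Rvec set)"
  define X0 where "X0 = {s \<in> ?X. fst s i = 0 \<and> fst (snd s) j = 0 \<and> snd (snd s) k = 0}"
  define g where "g = (\<lambda>(t :: 'a \<times> 'a \<times> 'a, s :: ('n, 'a) Rvec).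
     ((fst s)(i := fst t), (fst (snd s))(j := fst (snd t)), (snd (snd s))(k := snd (snd t))))"
  define h where "h = (\<lambda>s :: ('n, 'a) Rvec. ((fst s i, fst (snd s) j, snd (snd s) k),
     ((fst s)(i := 0), (fst (snd s))(j := 0), (snd (snd s))(k := 0))))"
  have bij: "bij_betw g (UNIV \<times> X0) ?X"
  proof (rule bij_betwI[of _ _ _ h])
    show "g \<in> UNIV \<times> X0 \<rightarrow> ?X" using i j k by (auto simp: g_def X0_def Delta_upd)
    show "h \<in> ?X \<rightarrow> UNIV \<times> X0" using i j k by (auto simp: h_def X0_def Delta_upd)
    show "h (g y) = y" if "y \<in> UNIV \<times> X0" for y
      using that by (auto simp: g_def h_def X0_def fun_eq_iff)
    show "g (h x) = x" if "x \<in> ?X" for x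
      by (auto simp: g_def h_def fun_eq_iff)
  qed
  let ?\<phi> = "\<lambda>s. lf u1 u2 u3 s * lf v1 v2 v3 s"
  have "(\<Sum>s\<in>?X. ?\<phi> s) = (\<Sum>y\<in>UNIV \<times> X0. ?\<phi> (g y))"
    by (rule sum.reindex_bij_betw[symmetric, OF bij])
  also have "\<dots> = (\<Sum>t\<in>UNIV. \<Sum>s0\<in>X0. ?\<phi> (g (t, s0)))"
    by (rule sum.cartesian_product')
  also have "\<dots> = (\<Sum>s0\<in>X0. \<Sum>t\<in>UNIV. ?\<phi> (g (t, s0)))"
    by (rule sum.swap)
  also have "\<dots> = 0"
  proof (rule sum.neutral, rule ballI)
    fix s0 assume s0: "s0 \<in> X0"
    obtain w1 w2 w3 where s0e: "s0 = (w1, w2, w3)" by (cases s0) auto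
    have z: "w1 i = 0" "w2 j = 0" "w3 k = 0" using s0 s0e by (auto simp: X0_def)
    have lfg: "lf x1 x2 x3 (g ((t1, t2, t3), s0)) = lf x1 x2 x3 s0 + t1 * x1 i + t2 * x2 j + t3 * x3 k"
      for x1 x2 x3 :: "'n \<Rightarrow> 'a" and t1 t2 t3
      by (simp add: g_def s0e lf_def dotp_upd z algebra_simps)
    have "(\<Sum>t\<in>UNIV. ?\<phi> (g (t, s0))) = (\<Sum>t1\<in>UNIV. \<Sum>t2\<in>UNIV. \<Sum>t3\<in>UNIV. ?\<phi> (g ((t1, t2, t3), s0)))"
      by (rule sum_UNIV3)
    also have "\<dots> = (\<Sum>t1\<in>UNIV. \<Sum>t2\<in>UNIV. \<Sum>t3\<in>UNIV.
       (lf u1 u2 u3 s0 + t1 * u1 i + t2 * u2 j + t3 * u3 k) * (lf v1 v2 v3 s0 + t1 * v1 i + t2 * v2 j + t3 * v3 k))"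
      by (simp only: lfg)
    also have "\<dots> = 0" by (rule cubic_sum)
    finally show "(\<Sum>t\<in>UNIV. ?\<phi> (g (t, s0))) = 0" .
  qed
  finally show ?thesis .
qed

lemma quad_S1:
  fixes u1 u2 u3 v1 v2 v3 :: "'n::finite \<Rightarrow> 'a::{finite,field}"
  assumes "A \<noteq> {}" "B \<noteq> {}" "C \<noteq> {}"
  shows "(\<Sum>s\<in>(S1 A B C :: ('n, 'a) Rvec set). lf u1 u2 u3 s * lf v1 v2 v3 s) = 0"
proof -
  obtain i j k where ijk: "i \<in> A" "j \<in> B" "k \<in> C" using assms by blast
  let ?X1 = "(Delta A \<times> Delta B \<times> Delta UNIV :: ('n, 'a) Rvec set)"
  let ?X2 = "(Delta A \<times> Delta B \<times> Delta C :: ('n, 'a) Rvec set)"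
  have "S1 A B C = ?X1 - ?X2" by (auto simp: S1_eq DeltaC_def)
  moreover have "?X2 \<subseteq> ?X1" by auto
  ultimately have "(\<Sum>s\<in>(S1 A B C :: ('n, 'a) Rvec set). lf u1 u2 u3 s * lf v1 v2 v3 s)
     = (\<Sum>s\<in>?X1. lf u1 u2 u3 s * lf v1 v2 v3 s) - (\<Sum>s\<in>?X2. lf u1 u2 u3 s * lf v1 v2 v3 s)"
    by (simp add: sum_diff)
  also have "\<dots> = 0" using Q0[OF ijk(1,2) UNIV_I, of u1 u2 u3 v1 v2 v3] Q0[OF ijk, of u1 u2 u3 v1 v2 v3] by simp
  finally show ?thesis .
qed


lemma selforth:
  assumes ne: "A \<noteq> {}" "B \<noteq> {}" "C \<noteq> {}"
  shows "self_orthogonal (S1 A B C \<times> UNIV) (range (cw A B C :: ('n::finite, 'a::{finite,field}) Rvec \<Rightarrow> _))"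
  unfolding self_orthogonal_def dual_code_def
proof (intro subsetI CollectI conjI ballI)
  fix y assume "y \<in> range (cw A B C :: ('n, 'a) Rvec \<Rightarrow> _)"
  then obtain \<alpha>' \<beta>' \<gamma>' where y: "y = cw A B C (\<alpha>', \<beta>', \<gamma>')" by auto
  show "y \<in> ambient (S1 A B C \<times> UNIV)"
    unfolding ambient_def y by (auto simp: cw_apply)
  fix x assume "x \<in> range (cw A B C :: ('n, 'a) Rvec \<Rightarrow> _)"
  then obtain \<alpha> \<beta> \<gamma> where x: "x = cw A B C (\<alpha>, \<beta>, \<gamma>)" by auto
  have "(\<Sum>p\<in>S1 A B C \<times> UNIV. x p * y p) = (\<Sum>s\<in>S1 A B C. \<Sum>b\<in>UNIV. x (s, b) * y (s, b))"
    by (rule sum.cartesian_product')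
  also have "\<dots> = (\<Sum>s\<in>S1 A B C. lf (\<alpha> + \<beta>) \<alpha> \<gamma> s * lf (\<alpha>' + \<beta>') \<alpha>' \<gamma>' s + lf \<beta> \<alpha> \<gamma> s * lf \<beta>' \<alpha>' \<gamma>' s)"
    by (rule sum.cong[OF refl]) (simp add: x y cw_apply UNIV_bool)
  also have "\<dots> = 0"
    by (simp only: sum.distrib quad_S1[OF ne] add_0_left)
  finally show "(\<Sum>p\<in>S1 A B C \<times> UNIV. x p * y p) = 0" .
qed

lemma distH_wt:
  fixes x y :: "'i \<Rightarrow> 'a::ab_group_add"
  shows "distH x y = wtH (x - y)"
  unfolding distH_def wtH_def by simp

context
  fixes A B C :: "'n::finite set"
  assumes ne: "A \<noteq> {}" "B \<noteq> {}" "C \<noteq> {}" and cm: "card C < CARD('n)" and nAB: "\<not> A \<subseteq> B"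
begin

lemma freq_T:
  assumes w: "w > 0"
  shows "freq (range (cw A B C :: ('n, 'a::{finite,field}) Rvec \<Rightarrow> _)) w = card {t \<in> (Delta (A \<union> B) \<times> Delta A \<times> UNIV :: ('n, 'a) Rvec set). wtH (cw A B C t) = w}"
proof -
  have "{c \<in> range (cw A B C :: ('n, 'a) Rvec \<Rightarrow> _). c \<noteq> 0 \<and> wtH c = w} = cw A B C ` {t \<in> (Delta (A \<union> B) \<times> Delta A \<times> UNIV :: ('n, 'a) Rvec set). wtH (cw A B C t) = w}"
  proof -
    have "{c \<in> range (cw A B C :: ('n, 'a) Rvec \<Rightarrow> _). c \<noteq> 0 \<and> wtH c = w} = {c \<in> cw A B C ` (Delta (A \<union> B) \<times> Delta A \<times> UNIV :: ('n, 'a) Rvec set). wtH c = w}"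
    proof -
      have r: "range (cw A B C :: ('n, 'a) Rvec \<Rightarrow> _) = cw A B C ` (Delta (A \<union> B) \<times> Delta A \<times> UNIV :: ('n, 'a) Rvec set)"
        by (rule range_T[OF ne cm nAB])
      have z: "wtH (0 :: ('n, 'a) Rvec \<times> bool \<Rightarrow> 'a) = 0" by (simp add: wtH_def)
      show ?thesis unfolding r using w z by auto
    qed
    also have "\<dots> = cw A B C ` {t \<in> (Delta (A \<union> B) \<times> Delta A \<times> UNIV :: ('n, 'a) Rvec set). wtH (cw A B C t) = w}" by auto
    finally show ?thesis .
  qed
  moreover have "inj_on (cw A B C) {t \<in> (Delta (A \<union> B) \<times> Delta A \<times> UNIV :: ('n, 'a) Rvec set). wtH (cw A B C t) = w}"
    using inj_T[OF ne cm nAB] by (rule inj_on_subset) auto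
  ultimately show ?thesis unfolding freq_def by (simp add: card_image)
qed

end


context
  fixes A B C :: "'n::finite set"
  assumes ne: "A \<noteq> {}" "B \<noteq> {}" "C \<noteq> {}" and cm: "card C < CARD('n)" and nAB: "\<not> A \<subseteq> B"
begin

lemma L_card_code: "card (range (cw A B C :: ('n, 'a::{finite,field}) Rvec \<Rightarrow> _)) = CARD('a) ^ card (A \<union> B) * CARD('a) ^ card A * CARD('a) ^ CARD('n)"
proof -
  have "card (range (cw A B C :: ('n, 'a) Rvec \<Rightarrow> _)) = card (Delta (A \<union> B) \<times> Delta A \<times> UNIV :: ('n, 'a) Rvec set)"
    unfolding range_T[OF ne cm nAB] by (rule card_image[OF inj_T[OF ne cm nAB]])
  then show ?thesis by (simp add: card_T)
qed

lemma L_sub: "module.subspace fscale (range (cw A B C :: ('n, 'a::{finite,field}) Rvec \<Rightarrow> _))"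
proof -
  interpret vs: vector_space "fscale :: 'a \<Rightarrow> (('n, 'a) Rvec \<times> bool \<Rightarrow> 'a) \<Rightarrow> _" by (rule vs_fscale)
  show ?thesis unfolding vs.subspace_def
  proof (intro conjI ballI allI)
    have "cw A B C (0, 0, 0) = (0 :: ('n, 'a) Rvec \<times> bool \<Rightarrow> 'a)" by (rule cw_diff[of A B C 0 0 0 0 0 0, unfolded diff_self])
    then show "0 \<in> range (cw A B C :: ('n, 'a) Rvec \<Rightarrow> _)" by (metis rangeI)
  next
    fix x y assume "x \<in> range (cw A B C :: ('n, 'a) Rvec \<Rightarrow> _)" "y \<in> range (cw A B C :: ('n, 'a) Rvec \<Rightarrow> _)"
    then obtain r r' where "x = cw A B C r" "y = cw A B C r'" by auto
    then obtain \<alpha> \<beta> \<gamma> \<alpha>' \<beta>' \<gamma>' where x: "x = cw A B C (\<alpha>, \<beta>, \<gamma>)" and y: "y = cw A B C (\<alpha>', \<beta>', \<gamma>')"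
      by (metis prod.collapse)
    show "x + y \<in> range (cw A B C :: ('n, 'a) Rvec \<Rightarrow> _)" unfolding x y cw_add[symmetric] by (rule rangeI)
  next
    fix k :: 'a and x assume "x \<in> range (cw A B C :: ('n, 'a) Rvec \<Rightarrow> _)"
    then obtain r where "x = cw A B C r" by auto
    then obtain \<alpha> \<beta> \<gamma> where x: "x = cw A B C (\<alpha>, \<beta>, \<gamma>)" by (metis prod.collapse)
    show "fscale k x \<in> range (cw A B C :: ('n, 'a) Rvec \<Rightarrow> _)" unfolding x cw_scale[symmetric] by (rule rangeI)
  qed
qed

lemma L_lin: "is_linear_code (S1 A B C \<times> UNIV) (range (cw A B C :: ('n, 'a::{finite,field}) Rvec \<Rightarrow> _))"
  unfolding is_linear_code_def
proof (intro conjI)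
  show "finite ((S1 A B C :: ('n, 'a) Rvec set) \<times> (UNIV :: bool set))" by (intro finite_cartesian_product finite_all3) simp
  show "range (cw A B C :: ('n, 'a) Rvec \<Rightarrow> _) \<subseteq> ambient (S1 A B C \<times> UNIV)"
  proof
    fix x assume "x \<in> range (cw A B C :: ('n, 'a) Rvec \<Rightarrow> _)"
    then obtain r where "x = cw A B C r" by auto
    then obtain \<alpha> \<beta> \<gamma> where x: "x = cw A B C (\<alpha>, \<beta>, \<gamma>)" by (metis prod.collapse)
    show "x \<in> ambient (S1 A B C \<times> UNIV)" unfolding ambient_def x by (auto simp: cw_apply)
  qed
  show "module.subspace fscale (range (cw A B C :: ('n, 'a) Rvec \<Rightarrow> _))" by (rule L_sub)
qed

lemma L_dim: "code_dim (range (cw A B C :: ('n, 'a::{finite,field}) Rvec \<Rightarrow> _)) = CARD('n) + card A + card (A \<union> B)"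
proof -
  have c1: "card (range (cw A B C :: ('n, 'a) Rvec \<Rightarrow> _)) = CARD('a) ^ vector_space.dim fscale (range (cw A B C :: ('n, 'a) Rvec \<Rightarrow> _))"
    by (rule card_subspace_fscale[OF L_sub]) simp
  have c2: "card (range (cw A B C :: ('n, 'a) Rvec \<Rightarrow> _)) = CARD('a) ^ card (A \<union> B) * CARD('a) ^ card A * CARD('a) ^ CARD('n)"
    by (rule L_card_code)
  have "CARD('a) ^ vector_space.dim fscale (range (cw A B C :: ('n, 'a) Rvec \<Rightarrow> _)) = CARD('a) ^ (CARD('n) + card A + card (A \<union> B))"
    using c1 c2 by (simp add: power_add ac_simps)
  moreover have "1 < CARD('a)" using card_ge2[where 'a='a] by simp
  ultimately show ?thesis unfolding code_dim_def using power_inject_exp by blast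
qed

lemma L_AB: "card (A - B) = card (A \<union> B) - card B" "card (A - B) \<ge> 1"
proof -
  have "card ((A - B) \<union> B) = card (A - B) + card B" by (rule card_Un_disjoint) auto
  moreover have "(A - B) \<union> B = A \<union> B" by auto
  ultimately have "card (A \<union> B) = card (A - B) + card B" by simp
  then show "card (A - B) = card (A \<union> B) - card B" by simp
  have "A - B \<noteq> {}" using nAB by auto
  then show "card (A - B) \<ge> 1" by (simp add: Suc_le_eq card_gt_0_iff)
qed


lemma L_WX: "0 < Wt CARD('a::{finite,field}) CARD('n) (card A) (card B) (card C)" "Wt CARD('a) CARD('n) (card A) (card B) (card C) < Xt CARD('a) CARD('n) (card A) (card B)" "0 < Xt CARD('a) CARD('n) (card A) (card B)"
proof -
  show "0 < Wt CARD('a) CARD('n) (card A) (card B) (card C)" by (rule WX(1)[OF ne cm nAB])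
  show "Wt CARD('a) CARD('n) (card A) (card B) (card C) < Xt CARD('a) CARD('n) (card A) (card B)" by (rule WX(2)[OF ne cm nAB])
  then show "0 < Xt CARD('a) CARD('n) (card A) (card B)" by simp
qed

lemma L_fW: "freq (range (cw A B C :: ('n, 'a) Rvec \<Rightarrow> _)) (Wt CARD('a) CARD('n) (card A) (card B) (card C)) = 2 * (CARD('a::{finite,field}) ^ (card (A \<union> B) - card B) - 1)"
proof -
  have "freq (range (cw A B C :: ('n, 'a) Rvec \<Rightarrow> _)) (Wt CARD('a) CARD('n) (card A) (card B) (card C)) = card {t \<in> (Delta (A \<union> B) \<times> Delta A \<times> UNIV :: ('n, 'a) Rvec set). wtH (cw A B C t) = Wt CARD('a) CARD('n) (card A) (card B) (card C)}"
    by (rule freq_T[OF ne cm nAB L_WX(1)])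
  also have "\<dots> = 2 * (CARD('a) ^ card (A - B) - 1)" by (rule card_cls_W[OF ne cm nAB])
  finally show ?thesis unfolding L_AB(1) .
qed

lemma L_fWX: "freq (range (cw A B C :: ('n, 'a) Rvec \<Rightarrow> _)) (Wt CARD('a) CARD('n) (card A) (card B) (card C) + Xt CARD('a) CARD('n) (card A) (card B)) = 2 * (CARD('a::{finite,field}) ^ (card (A \<union> B) - card B) - 1) * (CARD('a) ^ (CARD('n) - card C) - 1)"
proof -
  have w1: "0 < Wt CARD('a) CARD('n) (card A) (card B) (card C)" by (rule L_WX(1))
  have w3: "0 < Xt CARD('a) CARD('n) (card A) (card B)" by (rule L_WX(3))
  have "freq (range (cw A B C :: ('n, 'a) Rvec \<Rightarrow> _)) (Wt CARD('a) CARD('n) (card A) (card B) (card C) + Xt CARD('a) CARD('n) (card A) (card B)) = card {t \<in> (Delta (A \<union> B) \<times> Delta A \<times> UNIV :: ('n, 'a) Rvec set). wtH (cw A B C t) = Wt CARD('a) CARD('n) (card A) (card B) (card C) + Xt CARD('a) CARD('n) (card A) (card B)}"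
    by (rule freq_T[OF ne cm nAB]) (use w1 w3 in \<open>simp\<close>)
  also have "\<dots> = 2 * (CARD('a) ^ card (A - B) - 1) * (CARD('a) ^ (CARD('n) - card C) - 1)" by (rule card_cls_WX[OF ne cm nAB])
  finally show ?thesis unfolding L_AB(1) .
qed

lemma L_f2X: "freq (range (cw A B C :: ('n, 'a) Rvec \<Rightarrow> _)) (2 * Xt CARD('a) CARD('n) (card A) (card B)) = CARD('a::{finite,field}) ^ (CARD('n) - card C) - 1"
proof -
  have w1: "0 < Wt CARD('a) CARD('n) (card A) (card B) (card C)" by (rule L_WX(1))
  have w3: "0 < Xt CARD('a) CARD('n) (card A) (card B)" by (rule L_WX(3))
  have "freq (range (cw A B C :: ('n, 'a) Rvec \<Rightarrow> _)) (2 * Xt CARD('a) CARD('n) (card A) (card B)) = card {t \<in> (Delta (A \<union> B) \<times> Delta A \<times> UNIV :: ('n, 'a) Rvec set). wtH (cw A B C t) = 2 * Xt CARD('a) CARD('n) (card A) (card B)}"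
    by (rule freq_T[OF ne cm nAB]) (use w1 w3 in \<open>simp\<close>)
  also have "\<dots> = CARD('a) ^ (CARD('n) - card C) - 1" by (rule card_cls_2X[OF ne cm nAB])
  finally show ?thesis .
qed

lemma L_f2W: "int (freq (range (cw A B C :: ('n, 'a) Rvec \<Rightarrow> _)) (2 * Wt CARD('a) CARD('n) (card A) (card B) (card C))) = int CARD('a::{finite,field}) ^ (CARD('n) + card A + card (A \<union> B))
   - 2 * int CARD('a) ^ (CARD('n) - card C + card (A \<union> B) - card B) + int CARD('a) ^ (CARD('n) - card C)"
proof -
  have w1: "0 < Wt CARD('a) CARD('n) (card A) (card B) (card C)" by (rule L_WX(1))
  have w3: "0 < Xt CARD('a) CARD('n) (card A) (card B)" by (rule L_WX(3))
  define q where "q = CARD('a)"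
  define x where "x = q ^ (card (A \<union> B) - card B)"
  define y where "y = q ^ (CARD('n) - card C)"
  have q2: "q \<ge> 2" unfolding q_def by (rule card_ge2)
  have x1: "x \<ge> 1" "y \<ge> 1" unfolding x_def y_def using q2 by auto
  have f: "freq (range (cw A B C :: ('n, 'a) Rvec \<Rightarrow> _)) (2 * Wt CARD('a) CARD('n) (card A) (card B) (card C)) = card {t \<in> (Delta (A \<union> B) \<times> Delta A \<times> UNIV :: ('n, 'a) Rvec set). wtH (cw A B C t) = 2 * Wt CARD('a) CARD('n) (card A) (card B) (card C)}"
    by (rule freq_T[OF ne cm nAB]) (use w1 w3 in \<open>simp\<close>)
  have part: "card (Delta (A \<union> B) \<times> Delta A \<times> UNIV :: ('n, 'a) Rvec set) = 1 + card {t \<in> (Delta (A \<union> B) \<times> Delta A \<times> UNIV :: ('n, 'a) Rvec set). wtH (cw A B C t) = Wt CARD('a) CARD('n) (card A) (card B) (card C)} + card {t \<in> (Delta (A \<union> B) \<times> Delta A \<times> UNIV :: ('n, 'a) Rvec set). wtH (cw A B C t) = 2 * Wt CARD('a) CARD('n) (card A) (card B) (card C)}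
     + card {t \<in> (Delta (A \<union> B) \<times> Delta A \<times> UNIV :: ('n, 'a) Rvec set). wtH (cw A B C t) = Wt CARD('a) CARD('n) (card A) (card B) (card C) + Xt CARD('a) CARD('n) (card A) (card B)} + card {t \<in> (Delta (A \<union> B) \<times> Delta A \<times> UNIV :: ('n, 'a) Rvec set). wtH (cw A B C t) = 2 * Xt CARD('a) CARD('n) (card A) (card B)}"
    by (rule card_TT_partition[OF ne cm nAB])
  have cT: "card (Delta (A \<union> B) \<times> Delta A \<times> UNIV :: ('n, 'a) Rvec set) = q ^ (CARD('n) + card A + card (A \<union> B))"
    unfolding card_T q_def by (simp add: power_add ac_simps)
  have cW: "card {t \<in> (Delta (A \<union> B) \<times> Delta A \<times> UNIV :: ('n, 'a) Rvec set). wtH (cw A B C t) = Wt CARD('a) CARD('n) (card A) (card B) (card C)} = 2 * (x - 1)"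
    unfolding x_def q_def L_AB(1)[symmetric] by (rule card_cls_W[OF ne cm nAB])
  have cWX: "card {t \<in> (Delta (A \<union> B) \<times> Delta A \<times> UNIV :: ('n, 'a) Rvec set). wtH (cw A B C t) = Wt CARD('a) CARD('n) (card A) (card B) (card C) + Xt CARD('a) CARD('n) (card A) (card B)} = 2 * (x - 1) * (y - 1)"
    unfolding x_def y_def q_def L_AB(1)[symmetric] by (rule card_cls_WX[OF ne cm nAB])
  have c2X: "card {t \<in> (Delta (A \<union> B) \<times> Delta A \<times> UNIV :: ('n, 'a) Rvec set). wtH (cw A B C t) = 2 * Xt CARD('a) CARD('n) (card A) (card B)} = y - 1"
    unfolding y_def q_def by (rule card_cls_2X[OF ne cm nAB])
  have bab: "card B \<le> card (A \<union> B)" by (rule card_mono) auto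
  have exy: "q ^ (CARD('n) - card C + card (A \<union> B) - card B) = y * x"
  proof -
    have "CARD('n) - card C + card (A \<union> B) - card B = (CARD('n) - card C) + (card (A \<union> B) - card B)"
      using bab by arith
    then show ?thesis unfolding x_def y_def by (simp add: power_add)
  qed
  obtain x' where xs: "x = Suc x'" using x1 by (cases x) auto
  obtain y' where ys: "y = Suc y'" using x1 by (cases y) auto
  have eq: "card (Delta (A \<union> B) \<times> Delta A \<times> UNIV :: ('n, 'a) Rvec set) = 1 + 2 * x' + freq (range (cw A B C :: ('n, 'a) Rvec \<Rightarrow> _)) (2 * (Wt CARD('a) CARD('n) (card A) (card B) (card C))) + 2 * (x' * y') + y'"
    using part cW cWX c2X f unfolding xs ys by simp
  then have eqi: "int (card (Delta (A \<union> B) \<times> Delta A \<times> UNIV :: ('n, 'a) Rvec set)) = 1 + 2 * int x' + int (freq (range (cw A B C :: ('n, 'a) Rvec \<Rightarrow> _)) (2 * (Wt CARD('a) CARD('n) (card A) (card B) (card C)))) + 2 * (int x' * int y') + int y'"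
    by simp
  have "int (freq (range (cw A B C :: ('n, 'a) Rvec \<Rightarrow> _)) (2 * (Wt CARD('a) CARD('n) (card A) (card B) (card C)))) = int (q ^ (CARD('n) + card A + card (A \<union> B))) - 2 * int (q ^ (CARD('n) - card C + card (A \<union> B) - card B)) + int y"
    unfolding exy cT[symmetric] xs ys using eqi by (simp add: algebra_simps)
  then show ?thesis unfolding q_def y_def by simp
qed

lemma L_pos: "freq (range (cw A B C :: ('n, 'a::{finite,field}) Rvec \<Rightarrow> _)) (Wt CARD('a) CARD('n) (card A) (card B) (card C)) > 0" "freq (range (cw A B C :: ('n, 'a) Rvec \<Rightarrow> _)) (2 * Wt CARD('a) CARD('n) (card A) (card B) (card C)) > 0" "freq (range (cw A B C :: ('n, 'a) Rvec \<Rightarrow> _)) (Wt CARD('a) CARD('n) (card A) (card B) (card C) + Xt CARD('a) CARD('n) (card A) (card B)) > 0" "freq (range (cw A B C :: ('n, 'a) Rvec \<Rightarrow> _)) (2 * Xt CARD('a) CARD('n) (card A) (card B)) > 0"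
proof -
  have q2: "CARD('a) \<ge> 2" by (rule card_ge2)
  have e1: "card (A \<union> B) - card B \<ge> 1" using L_AB by simp
  have e2: "CARD('n) - card C \<ge> 1" using cm by simp
  have x: "CARD('a) ^ (card (A \<union> B) - card B) \<ge> 2"
    using q2 e1 by (metis dual_order.trans power_increasing power_one_right one_le_numeral)
  have y: "CARD('a) ^ (CARD('n) - card C) \<ge> 2"
    using q2 e2 by (metis dual_order.trans power_increasing power_one_right one_le_numeral)
  show "freq (range (cw A B C :: ('n, 'a) Rvec \<Rightarrow> _)) (Wt CARD('a) CARD('n) (card A) (card B) (card C)) > 0" unfolding L_fW using x by simp
  show "freq (range (cw A B C :: ('n, 'a) Rvec \<Rightarrow> _)) (Wt CARD('a) CARD('n) (card A) (card B) (card C) + Xt CARD('a) CARD('n) (card A) (card B)) > 0" unfolding L_fWX using x y by simp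
  show "freq (range (cw A B C :: ('n, 'a) Rvec \<Rightarrow> _)) (2 * Xt CARD('a) CARD('n) (card A) (card B)) > 0" unfolding L_f2X using y by simp
  have "int CARD('a) ^ (CARD('n) - card C + card (A \<union> B) - card B) * int CARD('a) \<le> int CARD('a) ^ (CARD('n) + card A + card (A \<union> B))"
  proof -
    have "card A \<ge> 1" using ne(1) by (simp add: Suc_le_eq card_gt_0_iff)
    then have "CARD('n) - card C + card (A \<union> B) - card B + 1 \<le> CARD('n) + card A + card (A \<union> B)" by arith
    then have "int CARD('a) ^ (CARD('n) - card C + card (A \<union> B) - card B + 1) \<le> int CARD('a) ^ (CARD('n) + card A + card (A \<union> B))"
      by (rule power_increasing) (use q2 in simp)
    then show ?thesis by (simp add: mult.commute)
  qed
  moreover have "int CARD('a) ^ (CARD('n) - card C + card (A \<union> B) - card B) * 2 \<le> int CARD('a) ^ (CARD('n) - card C + card (A \<union> B) - card B) * int CARD('a)"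
    using q2 by (intro mult_left_mono) auto
  moreover have "int CARD('a) ^ (CARD('n) - card C) > 0" using q2 by simp
  ultimately have "int (freq (range (cw A B C :: ('n, 'a) Rvec \<Rightarrow> _)) (2 * Wt CARD('a) CARD('n) (card A) (card B) (card C))) > 0" unfolding L_f2W by linarith
  then show "freq (range (cw A B C :: ('n, 'a) Rvec \<Rightarrow> _)) (2 * Wt CARD('a) CARD('n) (card A) (card B) (card C)) > 0" by simp
qed


lemma L_zero: "0 \<in> (range (cw A B C :: ('n, 'a::{finite,field}) Rvec \<Rightarrow> _))"
proof -
  have "cw A B C (0, 0, 0) = (0 :: ('n, 'a) Rvec \<times> bool \<Rightarrow> 'a)" by (rule cw_diff[of A B C 0 0 0 0 0 0, unfolded diff_self])
  then show ?thesis by (metis rangeI)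
qed

lemma L_minus: "x \<in> (range (cw A B C :: ('n, 'a::{finite,field}) Rvec \<Rightarrow> _)) \<Longrightarrow> y \<in> (range (cw A B C :: ('n, 'a) Rvec \<Rightarrow> _)) \<Longrightarrow> x - y \<in> (range (cw A B C :: ('n, 'a) Rvec \<Rightarrow> _))"
proof -
  assume "x \<in> (range (cw A B C :: ('n, 'a) Rvec \<Rightarrow> _))" "y \<in> (range (cw A B C :: ('n, 'a) Rvec \<Rightarrow> _))"
  then obtain r r' where "x = cw A B C r" "y = cw A B C r'" by auto
  then obtain \<alpha> \<beta> \<gamma> \<alpha>' \<beta>' \<gamma>' where x: "x = cw A B C (\<alpha>, \<beta>, \<gamma>)" and y: "y = cw A B C (\<alpha>', \<beta>', \<gamma>')"
    by (metis prod.collapse)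
  show "x - y \<in> (range (cw A B C :: ('n, 'a) Rvec \<Rightarrow> _))" unfolding x y cw_diff[symmetric] by (rule rangeI)
qed

lemma L_weights: "weights (range (cw A B C :: ('n, 'a::{finite,field}) Rvec \<Rightarrow> _)) = {(Wt CARD('a) CARD('n) (card A) (card B) (card C)), 2 * (Wt CARD('a) CARD('n) (card A) (card B) (card C)), (Wt CARD('a) CARD('n) (card A) (card B) (card C)) + (Xt CARD('a) CARD('n) (card A) (card B)), 2 * (Xt CARD('a) CARD('n) (card A) (card B))}"
proof
  have w1: "0 < (Wt CARD('a) CARD('n) (card A) (card B) (card C))" by (rule L_WX(1))
  have w2: "(Wt CARD('a) CARD('n) (card A) (card B) (card C)) < (Xt CARD('a) CARD('n) (card A) (card B))" by (rule L_WX(2))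
  show "weights (range (cw A B C :: ('n, 'a) Rvec \<Rightarrow> _)) \<subseteq> {(Wt CARD('a) CARD('n) (card A) (card B) (card C)), 2 * (Wt CARD('a) CARD('n) (card A) (card B) (card C)), (Wt CARD('a) CARD('n) (card A) (card B) (card C)) + (Xt CARD('a) CARD('n) (card A) (card B)), 2 * (Xt CARD('a) CARD('n) (card A) (card B))}"
  proof
    fix w assume "w \<in> weights (range (cw A B C :: ('n, 'a) Rvec \<Rightarrow> _))"
    then obtain c where c: "c \<in> (range (cw A B C :: ('n, 'a) Rvec \<Rightarrow> _))" "c \<noteq> 0" "w = wtH c" unfolding weights_def by auto
    then obtain t where t: "t \<in> (Delta (A \<union> B) \<times> Delta A \<times> UNIV :: ('n, 'a) Rvec set)" "c = cw A B C t" unfolding range_T[OF ne cm nAB] by auto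
    have "wtH (cw A B C t) \<in> {0, (Wt CARD('a) CARD('n) (card A) (card B) (card C)), 2 * (Wt CARD('a) CARD('n) (card A) (card B) (card C)), (Wt CARD('a) CARD('n) (card A) (card B) (card C)) + (Xt CARD('a) CARD('n) (card A) (card B)), 2 * (Xt CARD('a) CARD('n) (card A) (card B))}"
      unfolding wt_val_t[OF ne cm nAB] by (rule val_cases(6)[OF w1 w2])
    moreover have "wtH (cw A B C t) \<noteq> 0" using c t wtH_zero_iff by metis
    ultimately show "w \<in> {(Wt CARD('a) CARD('n) (card A) (card B) (card C)), 2 * (Wt CARD('a) CARD('n) (card A) (card B) (card C)), (Wt CARD('a) CARD('n) (card A) (card B) (card C)) + (Xt CARD('a) CARD('n) (card A) (card B)), 2 * (Xt CARD('a) CARD('n) (card A) (card B))}" using c t by auto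
  qed
  have fp: "w \<in> weights (range (cw A B C :: ('n, 'a) Rvec \<Rightarrow> _))" if "freq (range (cw A B C :: ('n, 'a) Rvec \<Rightarrow> _)) w > 0" for w
  proof -
    have "{c \<in> (range (cw A B C :: ('n, 'a) Rvec \<Rightarrow> _)). c \<noteq> 0 \<and> wtH c = w} \<noteq> {}" using that unfolding freq_def by (metis card.empty less_irrefl)
    then show ?thesis unfolding weights_def by blast
  qed
  show "{(Wt CARD('a) CARD('n) (card A) (card B) (card C)), 2 * (Wt CARD('a) CARD('n) (card A) (card B) (card C)), (Wt CARD('a) CARD('n) (card A) (card B) (card C)) + (Xt CARD('a) CARD('n) (card A) (card B)), 2 * (Xt CARD('a) CARD('n) (card A) (card B))} \<subseteq> weights (range (cw A B C :: ('n, 'a) Rvec \<Rightarrow> _))"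
    using fp L_pos by auto
qed

lemma L_min: "min_dist (range (cw A B C :: ('n, 'a::{finite,field}) Rvec \<Rightarrow> _)) = (Wt CARD('a) CARD('n) (card A) (card B) (card C))"
proof -
  have w1: "0 < (Wt CARD('a) CARD('n) (card A) (card B) (card C))" by (rule L_WX(1))
  have w2: "(Wt CARD('a) CARD('n) (card A) (card B) (card C)) < (Xt CARD('a) CARD('n) (card A) (card B))" by (rule L_WX(2))
  have "{distH x y | x y. x \<in> (range (cw A B C :: ('n, 'a) Rvec \<Rightarrow> _)) \<and> y \<in> (range (cw A B C :: ('n, 'a) Rvec \<Rightarrow> _)) \<and> x \<noteq> y} = weights (range (cw A B C :: ('n, 'a) Rvec \<Rightarrow> _))"
  proof
    show "{distH x y | x y. x \<in> (range (cw A B C :: ('n, 'a) Rvec \<Rightarrow> _)) \<and> y \<in> (range (cw A B C :: ('n, 'a) Rvec \<Rightarrow> _)) \<and> x \<noteq> y} \<subseteq> weights (range (cw A B C :: ('n, 'a) Rvec \<Rightarrow> _))"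
    proof
      fix d assume "d \<in> {distH x y | x y. x \<in> (range (cw A B C :: ('n, 'a) Rvec \<Rightarrow> _)) \<and> y \<in> (range (cw A B C :: ('n, 'a) Rvec \<Rightarrow> _)) \<and> x \<noteq> y}"
      then obtain x y where xy: "x \<in> (range (cw A B C :: ('n, 'a) Rvec \<Rightarrow> _))" "y \<in> (range (cw A B C :: ('n, 'a) Rvec \<Rightarrow> _))" "x \<noteq> y" "d = distH x y" by auto
      have "x - y \<in> (range (cw A B C :: ('n, 'a) Rvec \<Rightarrow> _))" by (rule L_minus[OF xy(1,2)])
      moreover have "x - y \<noteq> 0" using xy(3) by simp
      ultimately show "d \<in> weights (range (cw A B C :: ('n, 'a) Rvec \<Rightarrow> _))" unfolding weights_def xy(4) distH_wt by blast
    qed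
    show "weights (range (cw A B C :: ('n, 'a) Rvec \<Rightarrow> _)) \<subseteq> {distH x y | x y. x \<in> (range (cw A B C :: ('n, 'a) Rvec \<Rightarrow> _)) \<and> y \<in> (range (cw A B C :: ('n, 'a) Rvec \<Rightarrow> _)) \<and> x \<noteq> y}"
    proof
      fix w assume "w \<in> weights (range (cw A B C :: ('n, 'a) Rvec \<Rightarrow> _))"
      then obtain c where c: "c \<in> (range (cw A B C :: ('n, 'a) Rvec \<Rightarrow> _))" "c \<noteq> 0" "w = wtH c" unfolding weights_def by auto
      have "w = distH c 0" unfolding c(3) distH_wt by simp
      then show "w \<in> {distH x y | x y. x \<in> (range (cw A B C :: ('n, 'a) Rvec \<Rightarrow> _)) \<and> y \<in> (range (cw A B C :: ('n, 'a) Rvec \<Rightarrow> _)) \<and> x \<noteq> y}" using c L_zero by blast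
    qed
  qed
  then have "min_dist (range (cw A B C :: ('n, 'a) Rvec \<Rightarrow> _)) = Min {(Wt CARD('a) CARD('n) (card A) (card B) (card C)), 2 * (Wt CARD('a) CARD('n) (card A) (card B) (card C)), (Wt CARD('a) CARD('n) (card A) (card B) (card C)) + (Xt CARD('a) CARD('n) (card A) (card B)), 2 * (Xt CARD('a) CARD('n) (card A) (card B))}" unfolding min_dist_def L_weights by simp
  also have "\<dots> = (Wt CARD('a) CARD('n) (card A) (card B) (card C))" by (rule Min_eqI) (use w1 w2 in auto)
  finally show ?thesis .
qed

end


lemma eWX:
  assumes "c \<le> m" "a + b \<ge> 1"
  shows "(q - 1) * q ^ (a + b - 1) * (2 * q ^ m - q ^ c) = Wt q m a b c + Xt q m a b"
proof (cases "q = 0")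
  case True then show ?thesis by (simp add: Wt_def Xt_def)
next
  case False
  then have le: "q ^ c \<le> q ^ m" using assms(1) by (simp add: power_increasing)
  have eq1: "2 * q ^ m - q ^ c = (q ^ m - q ^ c) + q ^ m" using le by simp
  have eq2: "q ^ (m + a + b - 1) = q ^ (a + b - 1) * q ^ m"
  proof -
    have e: "m + a + b - 1 = (a + b - 1) + m" using assms(2) by arith
    show ?thesis unfolding e by (simp add: power_add)
  qed
  show ?thesis unfolding Wt_def Xt_def eq1 eq2 by (simp only: distrib_left mult.assoc)
qed

lemma card4: "0 < (W::nat) \<Longrightarrow> W < X \<Longrightarrow> card {W, 2 * W, W + X, 2 * X} = 4"
  by simp

theorem mainTheorem5:
  fixes A B C :: "'n::finite set"
  defines "m \<equiv> card (UNIV :: 'n set)"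
      and "q \<equiv> card (UNIV :: 'a::{finite, field} set)"
      and "D \<equiv> (S1 A B C :: ('n, 'a) Rvec set)"
      and "a \<equiv> card A" and "b \<equiv> card B" and "c \<equiv> card C" and "ab \<equiv> card (A \<union> B)"
  assumes "m \<ge> 2"
      and "A \<noteq> {}" and "B \<noteq> {}" and "C \<noteq> {}"
      and "card C < m"
      and "\<not> A \<subseteq> B"
  shows "is_linear_code (D \<times> (UNIV :: bool set)) (Phi D (codeR D))
    \<and> code_length (D \<times> (UNIV :: bool set)) (Phi D (codeR D)) = 2 * q ^ (a + b) * (q ^ m - q ^ c)
    \<and> code_dim (Phi D (codeR D)) = m + a + ab
    \<and> min_dist (Phi D (codeR D)) = (q - 1) * q ^ (a + b - 1) * (q ^ m - q ^ c)
    \<and> weights (Phi D (codeR D)) =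
        {(q - 1) * q ^ (a + b - 1) * (q ^ m - q ^ c),
         2 * (q - 1) * q ^ (a + b - 1) * (q ^ m - q ^ c),
         (q - 1) * q ^ (a + b - 1) * (2 * q ^ m - q ^ c),
         2 * (q - 1) * q ^ (m + a + b - 1)}
    \<and> card (weights (Phi D (codeR D))) = 4
    \<and> int (freq (Phi D (codeR D)) ((q - 1) * q ^ (a + b - 1) * (q ^ m - q ^ c)))
        = 2 * (int q ^ (ab - b) - 1)
    \<and> int (freq (Phi D (codeR D)) (2 * (q - 1) * q ^ (a + b - 1) * (q ^ m - q ^ c)))
        = int q ^ (m + a + ab) - 2 * int q ^ (m - c + ab - b) + int q ^ (m - c)
    \<and> int (freq (Phi D (codeR D)) ((q - 1) * q ^ (a + b - 1) * (2 * q ^ m - q ^ c)))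
        = 2 * (int q ^ (ab - b) - 1) * (int q ^ (m - c) - 1)
    \<and> int (freq (Phi D (codeR D)) (2 * (q - 1) * q ^ (m + a + b - 1)))
        = int q ^ (m - c) - 1
    \<and> ((q = 2 \<or> q = 3) \<longrightarrow> self_orthogonal (D \<times> (UNIV :: bool set)) (Phi D (codeR D)))"
proof -
  have ne: "A \<noteq> {}" "B \<noteq> {}" "C \<noteq> {}" using assms by auto
  have cm: "card C < CARD('n)" using \<open>card C < m\<close> unfolding m_def .
  have nAB: "\<not> A \<subseteq> B" using \<open>\<not> A \<subseteq> B\<close> .
  have Code: "Phi D (codeR D) = range (cw A B C :: ('n, 'a) Rvec \<Rightarrow> _)" unfolding D_def by (rule code_eq)
  have ab1: "a + b \<ge> 1" using ne(1) unfolding a_def by (simp add: Suc_le_eq card_gt_0_iff)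
  have cm': "c \<le> m" using cm unfolding c_def m_def by simp
  have eW: "(q - 1) * q ^ (a + b - 1) * (q ^ m - q ^ c) = Wt q m a b c" by (simp add: Wt_def)
  have e2W: "2 * (q - 1) * q ^ (a + b - 1) * (q ^ m - q ^ c) = 2 * Wt q m a b c" by (simp add: Wt_def mult.assoc)
  have e2X: "2 * (q - 1) * q ^ (m + a + b - 1) = 2 * Xt q m a b" by (simp add: Xt_def mult.assoc)
  have eWX': "(q - 1) * q ^ (a + b - 1) * (2 * q ^ m - q ^ c) = Wt q m a b c + Xt q m a b"
    by (rule eWX[OF cm' ab1])
  have w1: "0 < Wt q m a b c" unfolding q_def m_def a_def b_def c_def by (rule L_WX(1)[OF ne cm nAB])
  have w2: "Wt q m a b c < Xt q m a b" unfolding q_def m_def a_def b_def c_def by (rule L_WX(2)[OF ne cm nAB])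
  note defs = q_def m_def a_def b_def c_def ab_def
  show ?thesis
    unfolding Code eW e2W e2X eWX'
  proof (intro conjI)
    show "is_linear_code (D \<times> UNIV) (range (cw A B C :: ('n, 'a) Rvec \<Rightarrow> _))"
      unfolding D_def by (rule L_lin[OF ne cm nAB])
    show "code_length (D \<times> UNIV) (range (cw A B C :: ('n, 'a) Rvec \<Rightarrow> _)) = 2 * q ^ (a + b) * (q ^ m - q ^ c)"
      unfolding code_length_def D_def defs by (simp add: card_cartesian_product card_S1 power_add)
    show "code_dim (range (cw A B C :: ('n, 'a) Rvec \<Rightarrow> _)) = m + a + ab"
      unfolding defs by (rule L_dim[OF ne cm nAB])
    show "min_dist (range (cw A B C :: ('n, 'a) Rvec \<Rightarrow> _)) = Wt q m a b c"
      unfolding defs by (rule L_min[OF ne cm nAB])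
    show "weights (range (cw A B C :: ('n, 'a) Rvec \<Rightarrow> _)) = {Wt q m a b c, 2 * Wt q m a b c, Wt q m a b c + Xt q m a b, 2 * Xt q m a b}"
      unfolding defs by (rule L_weights[OF ne cm nAB])
    show "card (weights (range (cw A B C :: ('n, 'a) Rvec \<Rightarrow> _))) = 4"
      unfolding defs L_weights[OF ne cm nAB] using w1 w2 unfolding defs by (rule card4)
    show "int (freq (range (cw A B C :: ('n, 'a) Rvec \<Rightarrow> _)) (Wt q m a b c)) = 2 * (int q ^ (ab - b) - 1)"
    proof -
      have "q ^ (ab - b) \<ge> 1" using card_ge2[where 'a='a] unfolding q_def by simp
      then show ?thesis unfolding defs L_fW[OF ne cm nAB] by (simp add: of_nat_diff)
    qed
    show "int (freq (range (cw A B C :: ('n, 'a) Rvec \<Rightarrow> _)) (2 * Wt q m a b c)) = int q ^ (m + a + ab) - 2 * int q ^ (m - c + ab - b) + int q ^ (m - c)"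
      unfolding defs by (rule L_f2W[OF ne cm nAB])
    show "int (freq (range (cw A B C :: ('n, 'a) Rvec \<Rightarrow> _)) (Wt q m a b c + Xt q m a b)) = 2 * (int q ^ (ab - b) - 1) * (int q ^ (m - c) - 1)"
    proof -
      have "q ^ (ab - b) \<ge> 1" "q ^ (m - c) \<ge> 1" using card_ge2[where 'a='a] unfolding q_def by simp_all
      then show ?thesis unfolding defs L_fWX[OF ne cm nAB] by (simp add: of_nat_diff)
    qed
    show "int (freq (range (cw A B C :: ('n, 'a) Rvec \<Rightarrow> _)) (2 * Xt q m a b)) = int q ^ (m - c) - 1"
    proof -
      have "q ^ (m - c) \<ge> 1" using card_ge2[where 'a='a] unfolding q_def by simp
      then show ?thesis unfolding defs L_f2X[OF ne cm nAB] by (simp add: of_nat_diff)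
    qed
    show "q = 2 \<or> q = 3 \<longrightarrow> self_orthogonal (D \<times> UNIV) (range (cw A B C :: ('n, 'a) Rvec \<Rightarrow> _))"
      unfolding D_def using selforth[OF ne] by blast
  qed
qed


end
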